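(* Assume the setting in the context. Let $\mathcal{F}$ be a countable collection of functions on $[-1,1]^d$ with $|f|\le B_n$ for all $f\in\mathcal{F}$, and let $L_n:\mathcal{F}\to[0,\infty)$ satisfy $\sum_{f\in\mathcal{F}}e^{-L_n(f)}\le1$. Then $$\mathbb{E}\sup_{f\in\mathcal{F}}\Big\{D_n'(f,f^\star)-\tau P_n(f\|f^\star)-\tau\gamma_nL_n(f)/n\Big\}\le0.$$
   Context: Setting: $d,n\ge1$. $(X,Y)$ is a random pair with $X\in[-1,1]^d$ having law $P$, $Y\in\mathbb{R}$. The regression function $f^\star(x)=\mathbb{E}[Y\mid X=x]$ satisfies $|f^\star|\le B$. The noise $\epsilon=Y-f^\star(X)$ satisfies $\mathbb{V}(\epsilon\mid X)\le\sigma^2$ and the Bernstein condition $\mathbb{E}(|\epsilon|^k\mid X)\le\frac12k!\eta^{k-2}\mathbb{V}(\epsilon\mid X)$ for $k=3,4,\dots$, with $\eta>0$. The data $(X_1,Y_1),\dots,(X_n,Y_n)$ are i.i.d. copies of $(X,Y)$, and $X_1',\dots,X_n'$ are i.i.d. with law $P$, independent of the data. For functions $f,g$: $D_n'(f,g)=\frac1n\sum_{i=1}^n(f(X_i')-g(X_i'))^2$, $P_n(f\|f^\star)=\frac1n\sum_{i=1}^n[(Y_i-f(X_i))^2-(Y_i-f^\star(X_i))^2]$. $B_n\ge B$. For fixed $\delta_1,\delta_2>0$: $\tau=(1+\delta_1)(1+\delta_2)$ and $\gamma_n=(2\tau)^{-1}(1+\delta_1/2)(1+2/\delta_1)(B+B_n)^2+2(1+1/\delta_2)\sigma^2+2(B+B_n)\eta$.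 *)

theory Defs
  imports "HOL-Probability.Probability"
begin

definition cube :: "(real ^ 'd) set" where
  "cube = {x. \<forall>i. -1 \<le> x $ i \<and> x $ i \<le> 1}"

definition sigma_of :: "'w measure \<Rightarrow> ('w \<Rightarrow> 'b::topological_space) \<Rightarrow> 'w measure" where
  "sigma_of M X = vimage_algebra (space M) X borel"

text \<open>Empirical squared distance on the ghost sample X'.\<close>
definition Dn' :: "nat \<Rightarrow> (nat \<Rightarrow> 'x) \<Rightarrow> ('x \<Rightarrow> real) \<Rightarrow> ('x \<Rightarrow> real) \<Rightarrow> real" where
  "Dn' n Xs f g = (1 / real n) * (\<Sum>i<n. (f (Xs i) - g (Xs i))^2)"

definition Pn :: "nat \<Rightarrow> (nat \<Rightarrow> 'x) \<Rightarrow> (nat \<Rightarrow> real) \<Rightarrow> ('x \<Rightarrow> real) \<Rightarrow> ('x \<Rightarrow> real) \<Rightarrow> real" where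
  "Pn n Xs Ys f fstar =
     (1 / real n) * (\<Sum>i<n. (Ys i - f (Xs i))^2 - (Ys i - fstar (Xs i))^2)"

definition tau :: "real \<Rightarrow> real \<Rightarrow> real" where
  "tau \<delta>1 \<delta>2 = (1 + \<delta>1) * (1 + \<delta>2)"

definition gamma_n :: "real \<Rightarrow> real \<Rightarrow> real \<Rightarrow> real \<Rightarrow> real \<Rightarrow> real \<Rightarrow> real" where
  "gamma_n \<delta>1 \<delta>2 B Bn \<sigma> \<eta> =
     inverse (2 * tau \<delta>1 \<delta>2) * (1 + \<delta>1 / 2) * (1 + 2 / \<delta>1) * (B + Bn)^2
     + 2 * (1 + 1 / \<delta>2) * \<sigma>^2 + 2 * (B + Bn) * \<eta>"

end

theory Submission
  imports Defs
begin

lemma cosh_aux: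
  fixes t :: real assumes "t \<ge> 0"
  shows "exp (2*t*(1-t)) + exp (-(2*t*(1+t))) \<le> 2"
proof -
  have "-(4*t) * (1/2) + ln (1 + (1/2) * (exp (4*t) - 1)) \<le> (4*t)^2/8"
    by (rule Hoeffdings_lemma_aux) (use assms in auto)
  hence "ln ((1 + exp (4*t))/2) \<le> 2*t + 2*t^2"
    by (simp add: power2_eq_square field_simps)
  hence "(1 + exp (4*t))/2 \<le> exp (2*t + 2*t^2)"
    by (metis add_pos_pos divide_pos_pos exp_gt_zero exp_le_cancel_iff exp_ln zero_less_one zero_less_numeral)
  hence "exp (-(2*t + 2*t^2)) * ((1 + exp (4*t))/2) \<le> exp (-(2*t + 2*t^2)) * exp (2*t + 2*t^2)"
    by (intro mult_left_mono) auto
  also have "\<dots> = 1" by (simp add: exp_add[symmetric])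
  finally have "exp (-(2*t + 2*t^2)) * (1 + exp (4*t)) \<le> 2" by simp
  moreover have "exp (-(2*t + 2*t^2)) * (1 + exp (4*t)) = exp (-(2*t*(1+t))) + exp (2*t*(1-t))"
    by (simp add: distrib_left exp_add[symmetric] algebra_simps power2_eq_square)
  ultimately show ?thesis by simp
qed

lemma exp_chord:
  fixes x y s :: real assumes "0 \<le> s" "s \<le> 1"
  shows "exp (s * y) \<le> (1 - s) + s * exp y"
proof -
  have "convex_on UNIV (\<lambda>x. exp (1 * x))" by (rule convex_on_exp) simp
  from convex_onD[OF this, of s 0 y] assms show ?thesis by simp
qed

lemma scalar_B:
  fixes \<delta> x :: real
  assumes d: "\<delta> > 0" and x0: "0 \<le> x" and xm: "x \<le> 4*\<delta>*(1+\<delta>)/(2+\<delta>)^2"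
  shows "exp (x/(1+\<delta>)) + exp (-x) \<le> 2"
proof -
  define tm where "tm = \<delta>/(2+\<delta>)"
  define xmax where "xmax = 4*\<delta>*(1+\<delta>)/(2+\<delta>)^2"
  have tm0: "tm \<ge> 0" using d by (simp add: tm_def)
  have e1: "xmax = 2*tm*(1+tm)" using d by (simp add: xmax_def tm_def field_simps power2_eq_square)
  have dd: "1+\<delta> \<noteq> 0" "2+\<delta> \<noteq> 0" using d by auto
  have "xmax = (4*\<delta>/(2+\<delta>)^2) * (1+\<delta>)" unfolding xmax_def by simp
  hence e2a: "xmax/(1+\<delta>) = 4*\<delta>/(2+\<delta>)^2" using dd by simp
  have e2b: "1 - tm = 2/(2+\<delta>)" using dd unfolding tm_def by (simp add: field_simps)
  have e2: "xmax/(1+\<delta>) = 2*tm*(1-tm)" unfolding e2a e2b using dd unfolding tm_def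
    by (simp add: field_simps power2_eq_square)
  have phi: "exp (xmax/(1+\<delta>)) + exp (-xmax) \<le> 2"
    using cosh_aux[OF tm0] e1 e2 by simp
  have xmpos: "xmax > 0" using d by (simp add: xmax_def)
  define s where "s = x / xmax"
  have s0: "0 \<le> s" "s \<le> 1" using x0 xm xmpos unfolding s_def xmax_def[symmetric]
    by (auto simp: divide_le_eq_1)
  have xs: "x = s * xmax" using xmpos by (simp add: s_def)
  have "exp (x/(1+\<delta>)) = exp (s * (xmax/(1+\<delta>)))" by (simp add: xs)
  also have "\<dots> \<le> (1-s) + s * exp (xmax/(1+\<delta>))" by (rule exp_chord[OF s0])
  finally have a: "exp (x/(1+\<delta>)) \<le> (1-s) + s * exp (xmax/(1+\<delta>))" .
  have "exp (-x) = exp (s * (-xmax))" by (simp add: xs)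
  also have "\<dots> \<le> (1-s) + s * exp (-xmax)" by (rule exp_chord[OF s0])
  finally have b: "exp (-x) \<le> (1-s) + s * exp (-xmax)" .
  have "s * (exp (xmax/(1+\<delta>)) + exp (-xmax)) \<le> s * 2" using phi s0 by (intro mult_left_mono) auto
  with a b show ?thesis by (simp add: algebra_simps)
qed

lemma prod_le_one:
  fixes p A C :: real
  assumes "0 \<le> p" "p \<le> 1" "A \<ge> 0" "C \<le> 0" "A + C \<le> 0"
  shows "(1 + p*A) * (1 + p*C) \<le> 1"
proof -
  have "(1 + p*A) * (1 + p*C) = 1 + p*(A+C) + p*p*(A*C)" by (simp add: algebra_simps)
  moreover have "p*(A+C) \<le> 0" using assms by (simp add: mult_nonneg_nonpos)
  moreover have "p*p*(A*C) \<le> 0" using assms by (intro mult_nonneg_nonpos) (auto simp: mult_nonneg_nonpos)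
  ultimately show ?thesis by linarith
qed

lemma exp_rem_sums:
  fixes y :: real
  shows "(\<lambda>k. y^(k+2) / fact (k+2)) sums (exp y - 1 - y)"
proof -
  have "(\<lambda>k. y^k / fact k) sums exp y" using exp_converges[of y] by (simp add: divide_inverse_commute scaleR_conv_of_real field_class.field_divide_inverse)
  hence "(\<lambda>k. y^(k+2) / fact (k+2)) sums (exp y - (\<Sum>k<2. y^k / fact k))"
    using sums_iff_shift[of "\<lambda>k. y^k / fact k" 2] by simp
  moreover have "exp y - (\<Sum>k<2. y^k / fact k) = exp y - 1 - y" by (simp add: numeral_2_eq_2)
  ultimately show ?thesis by simp
qed

lemma exp_le_rem:
  fixes y :: real
  shows "exp y - 1 - y \<le> exp \<bar>y\<bar> - 1 - \<bar>y\<bar>"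
proof -
  have "(\<Sum>k. y^(k+2) / fact (k+2)) \<le> (\<Sum>k. \<bar>y\<bar>^(k+2) / fact (k+2))"
  proof (rule suminf_le)
    fix k show "y^(k+2) / fact (k+2) \<le> \<bar>y\<bar>^(k+2) / fact (k+2)"
    proof (intro divide_right_mono)
      show "y^(k+2) \<le> \<bar>y\<bar>^(k+2)" by (metis abs_ge_self power_abs)
    qed simp
  qed (use exp_rem_sums in \<open>auto simp: sums_iff\<close>)
  thus ?thesis using exp_rem_sums[of y] exp_rem_sums[of "\<bar>y\<bar>"] by (simp add: sums_iff)
qed

lemma pointwise_A:
  fixes G b \<gamma> \<eta> \<sigma> \<delta>2 :: real
  assumes g: "\<gamma> > 0" and d2: "\<delta>2 > 0" and Gb: "\<bar>G\<bar> \<le> b" and eta: "\<eta> > 0"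
    and gb: "2*b*\<eta> < \<gamma>" and gs: "\<gamma> - 2*b*\<eta> \<ge> 2*(1+1/\<delta>2)*\<sigma>^2"
  shows "exp (-(G^2/\<gamma>)) * (1 + (2*G/\<gamma>)^2*\<sigma>^2/(2*(1 - \<bar>2*G/\<gamma>\<bar>*\<eta>))) \<le> exp (-(G^2/((1+\<delta>2)*\<gamma>)))"
proof -
  define D where "D = \<gamma> - 2*\<bar>G\<bar>*\<eta>"
  have Dge: "D \<ge> \<gamma> - 2*b*\<eta>" unfolding D_def using Gb eta by (simp add: mult_right_mono)
  have Dpos: "D > 0" using Dge gb by linarith
  have q: "(2*G/\<gamma>)^2*\<sigma>^2/(2*(1 - \<bar>2*G/\<gamma>\<bar>*\<eta>)) = (G^2/\<gamma>) * (2*\<sigma>^2/D)"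
    using g Dpos unfolding D_def by (simp add: field_simps power2_eq_square abs_mult abs_divide)
  have "2*\<sigma>^2*(1+\<delta>2) \<le> \<delta>2 * D"
  proof -
    have "\<delta>2 * (2*(1+1/\<delta>2)*\<sigma>^2) \<le> \<delta>2 * D" using Dge gs d2 by (intro mult_left_mono) auto
    moreover have "\<delta>2 * (2*(1+1/\<delta>2)*\<sigma>^2) = 2*\<sigma>^2*(1+\<delta>2)" using d2 by (simp add: field_simps)
    ultimately show ?thesis by linarith
  qed
  hence r: "2*\<sigma>^2/D \<le> \<delta>2/(1+\<delta>2)" using Dpos d2 by (simp add: field_simps)
  have GG: "G^2/\<gamma> \<ge> 0" using g by simp
  have "(G^2/\<gamma>) * (2*\<sigma>^2/D) \<le> (G^2/\<gamma>) * (\<delta>2/(1+\<delta>2))" by (rule mult_left_mono[OF r GG])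
  also have "\<dots> = G^2/\<gamma> - G^2/((1+\<delta>2)*\<gamma>)"
  proof -
    have "1+\<delta>2 \<noteq> 0" using d2 by simp
    hence "\<delta>2/(1+\<delta>2) = 1 - 1/(1+\<delta>2)" by (simp add: field_simps)
    thus ?thesis by (simp add: right_diff_distrib)
  qed
  finally have qle: "(G^2/\<gamma>) * (2*\<sigma>^2/D) \<le> G^2/\<gamma> - G^2/((1+\<delta>2)*\<gamma>)" .
  have "exp (-(G^2/\<gamma>)) * (1 + (G^2/\<gamma>) * (2*\<sigma>^2/D)) \<le> exp (-(G^2/\<gamma>)) * exp ((G^2/\<gamma>) * (2*\<sigma>^2/D))"
    by (intro mult_left_mono exp_ge_add_one_self) auto
  also have "\<dots> = exp (-(G^2/\<gamma>) + (G^2/\<gamma>) * (2*\<sigma>^2/D))" by (rule exp_add[symmetric])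
  also have "\<dots> \<le> exp (-(G^2/((1+\<delta>2)*\<gamma>)))" using qle by simp
  finally show ?thesis unfolding q .
qed

lemma partA:
  fixes M :: "'w measure" and X :: "'w \<Rightarrow> real ^ 'd" and Y :: "'w \<Rightarrow> real"
    and fstar g :: "real ^ 'd \<Rightarrow> real"
  assumes prob: "prob_space M"
    and X_meas: "X \<in> borel_measurable M" and Y_meas: "Y \<in> borel_measurable M"
    and X_cube: "\<forall>\<omega>\<in>space M. X \<omega> \<in> cube"
    and Y_int: "integrable M Y"
    and fstar_meas: "fstar \<in> borel_measurable borel"
    and fstar_bd: "\<forall>x\<in>cube. \<bar>fstar x\<bar> \<le> B"
    and fstar_reg: "AE \<omega> in M. fstar (X \<omega>) = real_cond_exp M (sigma_of M X) Y \<omega>"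
    and noise_var: "AE \<omega> in M.
        nn_cond_exp M (sigma_of M X) (\<lambda>\<omega>. ennreal ((Y \<omega> - fstar (X \<omega>))^2)) \<omega> \<le> ennreal (\<sigma>^2)"
    and eta_pos: "\<eta> > 0"
    and bernstein: "\<forall>k::nat. k \<ge> 3 \<longrightarrow> (AE \<omega> in M.
        nn_cond_exp M (sigma_of M X) (\<lambda>\<omega>. ennreal (\<bar>Y \<omega> - fstar (X \<omega>)\<bar> ^ k)) \<omega>
        \<le> ennreal (fact k * \<eta> ^ (k - 2) / 2)
           * nn_cond_exp M (sigma_of M X) (\<lambda>\<omega>. ennreal ((Y \<omega> - fstar (X \<omega>))^2)) \<omega>)"
    and g_meas: "g \<in> borel_measurable borel" and g_bd: "\<forall>x\<in>cube. \<bar>g x\<bar> \<le> b"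
    and gam: "\<gamma> > 0" and d2: "\<delta>2 > 0" and gb: "2*b*\<eta> < \<gamma>"
    and gs: "\<gamma> - 2*b*\<eta> \<ge> 2*(1+1/\<delta>2)*\<sigma>^2"
  shows "(\<integral>\<^sup>+\<omega>. ennreal (exp (-((g (X \<omega>))^2 - 2*(Y \<omega> - fstar (X \<omega>))*g (X \<omega>))/\<gamma>)) \<partial>M)
         \<le> (\<integral>\<^sup>+\<omega>. ennreal (exp (-((g (X \<omega>))^2/((1+\<delta>2)*\<gamma>)))) \<partial>M)"
proof -
  interpret prob_space M by (rule prob)
  note [measurable] = X_meas Y_meas fstar_meas g_meas
  let ?S = "sigma_of M X"
  have subalg: "subalgebra M ?S" unfolding sigma_of_def subalgebra_def
    using sets_image_in_sets[OF refl X_meas] by simp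
  interpret finite_measure_subalgebra M ?S by unfold_locales (rule subalg)
  have XS[measurable]: "X \<in> measurable ?S borel"
    unfolding sigma_of_def by (rule measurable_vimage_algebra1) simp
  define G where "G \<omega> = g (X \<omega>)" for \<omega>
  define E where "E \<omega> = Y \<omega> - fstar (X \<omega>)" for \<omega>
  define t where "t \<omega> = 2 * G \<omega> / \<gamma>" for \<omega>
  define h where "h \<omega> = exp (-((G \<omega>)^2/\<gamma>))" for \<omega>
  define V where "V = nn_cond_exp M ?S (\<lambda>\<omega>. ennreal ((E \<omega>)^2))"
  define R where "R \<omega> = exp \<bar>t \<omega> * E \<omega>\<bar> - 1 - \<bar>t \<omega> * E \<omega>\<bar>" for \<omega>
  define q where "q \<omega> = (t \<omega>)^2 * \<sigma>^2 / (2*(1 - \<bar>t \<omega>\<bar>*\<eta>))" for \<omega>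
  have GM[measurable]: "G \<in> borel_measurable M" "E \<in> borel_measurable M" "t \<in> borel_measurable M"
     "h \<in> borel_measurable M" "R \<in> borel_measurable M" "q \<in> borel_measurable M"
    unfolding G_def E_def t_def h_def R_def q_def by measurable
  have GS[measurable]: "G \<in> borel_measurable ?S" "t \<in> borel_measurable ?S" "h \<in> borel_measurable ?S"
    unfolding G_def t_def h_def by measurable
  have Gb: "\<bar>G \<omega>\<bar> \<le> b" if "\<omega> \<in> space M" for \<omega>
    using that X_cube g_bd by (simp add: G_def)
  have tb: "\<bar>t \<omega>\<bar> \<le> 2*b/\<gamma>" if "\<omega> \<in> space M" for \<omega>
    using Gb[OF that] gam by (simp add: t_def abs_mult abs_divide divide_right_mono)
  have teta: "\<bar>t \<omega>\<bar> * \<eta> \<le> 2*b*\<eta>/\<gamma>" if "\<omega> \<in> space M" for \<omega>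
    using mult_right_mono[OF tb[OF that], of \<eta>] eta_pos by simp
  have beta1: "2*b*\<eta>/\<gamma> < 1" using gb gam by simp
  have teta1: "\<bar>t \<omega>\<bar> * \<eta> < 1" if "\<omega> \<in> space M" for \<omega>
    using teta[OF that] beta1 by linarith
  have h01: "0 < h \<omega>" "h \<omega> \<le> 1" for \<omega> using gam by (auto simp: h_def)
  have h0: "0 \<le> h \<omega>" for \<omega> using h01(1)[of \<omega>] by simp
  define c where "c k \<omega> = h \<omega> * \<bar>t \<omega>\<bar>^(k+2) / fact (k+2)" for k \<omega>
  have cS[measurable]: "(\<lambda>\<omega>. ennreal (c k \<omega>)) \<in> borel_measurable ?S" for k
    unfolding c_def by measurable
  have cM[measurable]: "(\<lambda>\<omega>. ennreal (c k \<omega>)) \<in> borel_measurable M" for k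
    unfolding c_def by measurable
  have c0: "c k \<omega> \<ge> 0" for k \<omega> using h01[of \<omega>] by (simp add: c_def)
  have hR: "ennreal (h \<omega> * R \<omega>) = (\<Sum>k. ennreal (c k \<omega>) * ennreal (\<bar>E \<omega>\<bar>^(k+2)))" for \<omega>
  proof -
    have "(\<lambda>k. h \<omega> * (\<bar>t \<omega> * E \<omega>\<bar>^(k+2) / fact (k+2))) sums (h \<omega> * R \<omega>)"
      unfolding R_def using exp_rem_sums[of "\<bar>t \<omega> * E \<omega>\<bar>"] by (intro sums_mult) simp
    moreover have "h \<omega> * (\<bar>t \<omega> * E \<omega>\<bar>^(k+2) / fact (k+2)) = c k \<omega> * \<bar>E \<omega>\<bar>^(k+2)" for k
      by (simp add: c_def abs_mult power_mult_distrib)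
    ultimately have su: "(\<lambda>k. c k \<omega> * \<bar>E \<omega>\<bar>^(k+2)) sums (h \<omega> * R \<omega>)" by simp
    have "(\<Sum>k. ennreal (c k \<omega> * \<bar>E \<omega>\<bar>^(k+2))) = ennreal (\<Sum>k. c k \<omega> * \<bar>E \<omega>\<bar>^(k+2))"
      using su c0 by (intro suminf_ennreal2) (auto simp: sums_iff)
    also have "\<dots> = ennreal (h \<omega> * R \<omega>)" using su by (simp add: sums_iff)
    finally show ?thesis using c0 by (simp add: ennreal_mult)
  qed
  have "(\<integral>\<^sup>+\<omega>. ennreal (h \<omega> * R \<omega>) \<partial>M) = (\<Sum>k. \<integral>\<^sup>+\<omega>. ennreal (c k \<omega>) * ennreal (\<bar>E \<omega>\<bar>^(k+2)) \<partial>M)"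
    unfolding hR by (rule nn_integral_suminf) measurable
  also have "\<dots> = (\<Sum>k. \<integral>\<^sup>+\<omega>. ennreal (c k \<omega>) * nn_cond_exp M ?S (\<lambda>\<omega>. ennreal (\<bar>E \<omega>\<bar>^(k+2))) \<omega> \<partial>M)"
    by (intro suminf_cong nn_cond_exp_intg[symmetric]) measurable
  also have "\<dots> \<le> (\<Sum>k. \<integral>\<^sup>+\<omega>. ennreal (h \<omega> * \<bar>t \<omega>\<bar>^(k+2) * \<eta>^k / 2) * V \<omega> \<partial>M)"
  proof (intro suminf_le summableI nn_integral_mono_AE)
    fix k :: nat
    have bk: "AE \<omega> in M. nn_cond_exp M ?S (\<lambda>\<omega>. ennreal (\<bar>E \<omega>\<bar>^(k+2))) \<omega> \<le> ennreal (fact (k+2) * \<eta>^k / 2) * V \<omega>"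
    proof (cases "k = 0")
      case True
      have "(\<lambda>\<omega>. ennreal (\<bar>E \<omega>\<bar>^(k+2))) = (\<lambda>\<omega>. ennreal ((E \<omega>)^2))" using True by (simp add: power2_eq_square)
      thus ?thesis using True by (simp add: V_def)
    next
      case False
      hence "k + 2 \<ge> 3" by simp
      with bernstein have "AE \<omega> in M.
        nn_cond_exp M ?S (\<lambda>\<omega>. ennreal (\<bar>Y \<omega> - fstar (X \<omega>)\<bar> ^ (k+2))) \<omega>
        \<le> ennreal (fact (k+2) * \<eta> ^ (k + 2 - 2) / 2)
           * nn_cond_exp M ?S (\<lambda>\<omega>. ennreal ((Y \<omega> - fstar (X \<omega>))^2)) \<omega>" by blast
      thus ?thesis by (simp add: E_def V_def)
    qed
    show "AE \<omega> in M. ennreal (c k \<omega>) * nn_cond_exp M ?S (\<lambda>\<omega>. ennreal (\<bar>E \<omega>\<bar>^(k+2))) \<omega>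
        \<le> ennreal (h \<omega> * \<bar>t \<omega>\<bar>^(k+2) * \<eta>^k / 2) * V \<omega>"
    proof (rule AE_mp[OF bk], intro AE_I2 impI)
      fix \<omega> assume le: "nn_cond_exp M ?S (\<lambda>\<omega>. ennreal (\<bar>E \<omega>\<bar>^(k+2))) \<omega> \<le> ennreal (fact (k+2) * \<eta>^k / 2) * V \<omega>"
      have "ennreal (c k \<omega>) * nn_cond_exp M ?S (\<lambda>\<omega>. ennreal (\<bar>E \<omega>\<bar>^(k+2))) \<omega>
          \<le> ennreal (c k \<omega>) * (ennreal (fact (k+2) * \<eta>^k / 2) * V \<omega>)"
        by (rule mult_left_mono[OF le]) simp
      also have "\<dots> = ennreal (c k \<omega> * (fact (k+2) * \<eta>^k / 2)) * V \<omega>"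
      proof -
        have nn: "0 \<le> fact (k+2) * \<eta>^k / (2::real)" using eta_pos by simp
        show ?thesis unfolding ennreal_mult[OF c0 nn] by (simp add: mult.assoc)
      qed
      also have "c k \<omega> * (fact (k+2) * \<eta>^k / 2) = h \<omega> * \<bar>t \<omega>\<bar>^(k+2) * \<eta>^k / 2"
        by (simp add: c_def)
      finally show "ennreal (c k \<omega>) * nn_cond_exp M ?S (\<lambda>\<omega>. ennreal (\<bar>E \<omega>\<bar>^(k+2))) \<omega>
        \<le> ennreal (h \<omega> * \<bar>t \<omega>\<bar>^(k+2) * \<eta>^k / 2) * V \<omega>" .
    qed
  qed
  also have "\<dots> = (\<integral>\<^sup>+\<omega>. (\<Sum>k. ennreal (h \<omega> * \<bar>t \<omega>\<bar>^(k+2) * \<eta>^k / 2) * V \<omega>) \<partial>M)"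
    by (rule nn_integral_suminf[symmetric]) (measurable, simp add: V_def)
  also have "\<dots> = (\<integral>\<^sup>+\<omega>. ennreal (h \<omega> * (t \<omega>)^2 / (2*(1 - \<bar>t \<omega>\<bar>*\<eta>))) * V \<omega> \<partial>M)"
  proof (intro nn_integral_cong)
    fix \<omega> assume w: "\<omega> \<in> space M"
    have "(\<lambda>k. (\<bar>t \<omega>\<bar>*\<eta>)^k) sums (1/(1 - \<bar>t \<omega>\<bar>*\<eta>))"
      using teta1[OF w] eta_pos by (intro geometric_sums) simp
    hence su0: "(\<lambda>k. (h \<omega> * (t \<omega>)^2 / 2) * (\<bar>t \<omega>\<bar>*\<eta>)^k) sums ((h \<omega> * (t \<omega>)^2 / 2) * (1/(1 - \<bar>t \<omega>\<bar>*\<eta>)))"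
      by (rule sums_mult)
    have e1: "(\<lambda>k. (h \<omega> * (t \<omega>)^2 / 2) * (\<bar>t \<omega>\<bar>*\<eta>)^k) = (\<lambda>k. h \<omega> * \<bar>t \<omega>\<bar>^(k+2) * \<eta>^k / 2)"
      by (rule ext) (simp add: power_add power_mult_distrib power2_eq_square)
    have e2: "(h \<omega> * (t \<omega>)^2 / 2) * (1/(1 - \<bar>t \<omega>\<bar>*\<eta>)) = h \<omega> * (t \<omega>)^2 / (2*(1 - \<bar>t \<omega>\<bar>*\<eta>))"
      by simp
    have su: "(\<lambda>k. h \<omega> * \<bar>t \<omega>\<bar>^(k+2) * \<eta>^k / 2) sums (h \<omega> * (t \<omega>)^2 / (2*(1 - \<bar>t \<omega>\<bar>*\<eta>)))"
      using su0 unfolding e1 e2 .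
    have "(\<Sum>k. ennreal (h \<omega> * \<bar>t \<omega>\<bar>^(k+2) * \<eta>^k / 2)) = ennreal (h \<omega> * (t \<omega>)^2 / (2*(1 - \<bar>t \<omega>\<bar>*\<eta>)))"
    proof (subst suminf_ennreal2)
      show "0 \<le> h \<omega> * \<bar>t \<omega>\<bar>^(k+2) * \<eta>^k / 2" for k
        using h01[of \<omega>] eta_pos by (intro divide_nonneg_pos mult_nonneg_nonneg) auto
    qed (use su in \<open>auto simp: sums_iff\<close>)
    thus "(\<Sum>k. ennreal (h \<omega> * \<bar>t \<omega>\<bar>^(k+2) * \<eta>^k / 2) * V \<omega>) = ennreal (h \<omega> * (t \<omega>)^2 / (2*(1 - \<bar>t \<omega>\<bar>*\<eta>))) * V \<omega>"
      by simp
  qed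
  also have "\<dots> \<le> (\<integral>\<^sup>+\<omega>. ennreal (h \<omega> * q \<omega>) \<partial>M)"
  proof (rule nn_integral_mono_AE)
    show "AE \<omega> in M. ennreal (h \<omega> * (t \<omega>)^2 / (2*(1 - \<bar>t \<omega>\<bar>*\<eta>))) * V \<omega> \<le> ennreal (h \<omega> * q \<omega>)"
    proof (rule AE_mp[OF noise_var], intro AE_I2 impI)
      fix \<omega> assume w: "\<omega> \<in> space M" and nv: "nn_cond_exp M ?S (\<lambda>\<omega>. ennreal ((Y \<omega> - fstar (X \<omega>))^2)) \<omega> \<le> ennreal (\<sigma>^2)"
      have Vle: "V \<omega> \<le> ennreal (\<sigma>^2)" using nv by (simp add: V_def E_def)
      have nn: "0 \<le> h \<omega> * (t \<omega>)^2 / (2*(1 - \<bar>t \<omega>\<bar>*\<eta>))" using h01[of \<omega>] teta1[OF w] by simp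
      have "ennreal (h \<omega> * (t \<omega>)^2 / (2*(1 - \<bar>t \<omega>\<bar>*\<eta>))) * V \<omega> \<le> ennreal (h \<omega> * (t \<omega>)^2 / (2*(1 - \<bar>t \<omega>\<bar>*\<eta>))) * ennreal (\<sigma>^2)"
        by (rule mult_left_mono[OF Vle]) simp
      also have "\<dots> = ennreal (h \<omega> * q \<omega>)" using nn by (simp add: ennreal_mult[symmetric] q_def mult.assoc)
      finally show "ennreal (h \<omega> * (t \<omega>)^2 / (2*(1 - \<bar>t \<omega>\<bar>*\<eta>))) * V \<omega> \<le> ennreal (h \<omega> * q \<omega>)" .
    qed
  qed
  finally have A1: "(\<integral>\<^sup>+\<omega>. ennreal (h \<omega> * R \<omega>) \<partial>M) \<le> (\<integral>\<^sup>+\<omega>. ennreal (h \<omega> * q \<omega>) \<partial>M)" .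
  have fXb: "\<bar>fstar (X \<omega>)\<bar> \<le> B" if "\<omega> \<in> space M" for \<omega> using that X_cube fstar_bd by simp
  have int_fX: "integrable M (\<lambda>\<omega>. fstar (X \<omega>))"
    by (rule integrable_const_bound[where B=B]) (use fXb in auto)
  have int_E: "integrable M E" unfolding E_def using Y_int int_fX by (rule Bochner_Integration.integrable_diff)
  have htb: "\<bar>h \<omega> * t \<omega>\<bar> \<le> 2*b/\<gamma>" if "\<omega> \<in> space M" for \<omega>
  proof -
    have "\<bar>h \<omega> * t \<omega>\<bar> = h \<omega> * \<bar>t \<omega>\<bar>" using h01[of \<omega>] by (simp add: abs_mult)
    also have "\<dots> \<le> 1 * \<bar>t \<omega>\<bar>" using h01[of \<omega>] by (intro mult_right_mono) auto
    finally show ?thesis using tb[OF that] by simp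
  qed
  have int_bdd: "integrable M (\<lambda>\<omega>. h \<omega> * t \<omega> * Z \<omega>)" if Zi: "integrable M Z" and [measurable]: "Z \<in> borel_measurable M" for Z
  proof (rule Bochner_Integration.integrable_bound[where f="\<lambda>\<omega>. (2*b/\<gamma>) * Z \<omega>"])
    show "integrable M (\<lambda>\<omega>. (2*b/\<gamma>) * Z \<omega>)" using Zi by simp
    show "AE \<omega> in M. norm (h \<omega> * t \<omega> * Z \<omega>) \<le> norm ((2*b/\<gamma>) * Z \<omega>)"
    proof (intro AE_I2)
      fix \<omega> assume w: "\<omega> \<in> space M"
      have "norm (h \<omega> * t \<omega> * Z \<omega>) = \<bar>h \<omega> * t \<omega>\<bar> * \<bar>Z \<omega>\<bar>" by (simp add: abs_mult)
      also have "\<dots> \<le> \<bar>2*b/\<gamma>\<bar> * \<bar>Z \<omega>\<bar>" using order_trans[OF htb[OF w] abs_ge_self] by (intro mult_right_mono) auto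
      finally show "norm (h \<omega> * t \<omega> * Z \<omega>) \<le> norm ((2*b/\<gamma>) * Z \<omega>)" by (simp add: abs_mult)
    qed
  qed measurable
  have int_htE: "integrable M (\<lambda>\<omega>. h \<omega> * t \<omega> * E \<omega>)" by (rule int_bdd[OF int_E]) measurable
  have int_htY: "integrable M (\<lambda>\<omega>. h \<omega> * t \<omega> * Y \<omega>)" by (rule int_bdd[OF Y_int]) measurable
  have int_htF: "integrable M (\<lambda>\<omega>. h \<omega> * t \<omega> * fstar (X \<omega>))" by (rule int_bdd[OF int_fX]) measurable
  have htS: "(\<lambda>\<omega>. h \<omega> * t \<omega>) \<in> borel_measurable ?S" by measurable
  have "(\<integral>\<omega>. h \<omega> * t \<omega> * real_cond_exp M ?S Y \<omega> \<partial>M) = (\<integral>\<omega>. h \<omega> * t \<omega> * Y \<omega> \<partial>M)"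
    by (rule real_cond_exp_intg(2)[OF int_htY htS Y_meas])
  moreover have "(\<integral>\<omega>. h \<omega> * t \<omega> * real_cond_exp M ?S Y \<omega> \<partial>M) = (\<integral>\<omega>. h \<omega> * t \<omega> * fstar (X \<omega>) \<partial>M)"
    by (rule integral_cong_AE) (use fstar_reg in \<open>auto elim!: AE_mp\<close>)
  ultimately have E0: "(\<integral>\<omega>. h \<omega> * t \<omega> * E \<omega> \<partial>M) = 0"
    using int_htY int_htF by (simp add: E_def right_diff_distrib)
  define K where "K = (2*b/\<gamma>)^2 * \<sigma>^2 / (2*(1 - 2*b*\<eta>/\<gamma>))"
  have q0: "0 \<le> q \<omega>" if "\<omega> \<in> space M" for \<omega> using teta1[OF that] by (simp add: q_def)
  have qK: "q \<omega> \<le> K" if w: "\<omega> \<in> space M" for \<omega>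
  proof -
    have "(t \<omega>)^2 \<le> (2*b/\<gamma>)^2" using tb[OF w] by (metis abs_ge_zero order_trans power2_abs power_mono)
    hence num: "(t \<omega>)^2 * \<sigma>^2 \<le> (2*b/\<gamma>)^2 * \<sigma>^2" by (intro mult_right_mono) auto
    have den: "2*(1 - 2*b*\<eta>/\<gamma>) \<le> 2*(1 - \<bar>t \<omega>\<bar>*\<eta>)" using teta[OF w] by simp
    have dpos: "0 < 2*(1 - 2*b*\<eta>/\<gamma>)" using beta1 by simp
    show ?thesis unfolding q_def K_def
      by (rule frac_le) (use num den dpos in auto)
  qed
  have hq_int: "integrable M (\<lambda>\<omega>. h \<omega> * q \<omega>)"
  proof (rule integrable_const_bound[where B=K])
    show "AE \<omega> in M. norm (h \<omega> * q \<omega>) \<le> K"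
    proof (intro AE_I2)
      fix \<omega> assume w: "\<omega> \<in> space M"
      have "norm (h \<omega> * q \<omega>) = h \<omega> * q \<omega>" using h01[of \<omega>] q0[OF w] by simp
      also have "\<dots> \<le> 1 * q \<omega>" using h01[of \<omega>] q0[OF w] by (intro mult_right_mono) auto
      finally show "norm (h \<omega> * q \<omega>) \<le> K" using qK[OF w] by simp
    qed
  qed measurable
  have R0: "0 \<le> R \<omega>" for \<omega> unfolding R_def using exp_ge_add_one_self[of "\<bar>t \<omega> * E \<omega>\<bar>"] by linarith
  have hR_fin: "(\<integral>\<^sup>+\<omega>. ennreal (h \<omega> * R \<omega>) \<partial>M) < \<infinity>"
  proof -
    have "(\<integral>\<^sup>+\<omega>. ennreal (h \<omega> * q \<omega>) \<partial>M) = ennreal (\<integral>\<omega>. h \<omega> * q \<omega> \<partial>M)"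
      by (rule nn_integral_eq_integral[OF hq_int]) (intro AE_I2, simp add: h0 q0)
    hence "(\<integral>\<^sup>+\<omega>. ennreal (h \<omega> * R \<omega>) \<partial>M) \<le> ennreal (\<integral>\<omega>. h \<omega> * q \<omega> \<partial>M)" using A1 by simp
    from le_less_trans[OF this ennreal_less_top] show ?thesis by simp
  qed
  have hR_int: "integrable M (\<lambda>\<omega>. h \<omega> * R \<omega>)"
  proof -
    have "(\<integral>\<^sup>+\<omega>. ennreal (norm (h \<omega> * R \<omega>)) \<partial>M) = (\<integral>\<^sup>+\<omega>. ennreal (h \<omega> * R \<omega>) \<partial>M)"
      by (intro nn_integral_cong) (simp add: h0 R0)
    with hR_fin show ?thesis unfolding integrable_iff_bounded by simp
  qed
  have h_int: "integrable M h"
  proof (rule integrable_const_bound[where B=1])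
    show "AE \<omega> in M. norm (h \<omega>) \<le> 1" using h0 h01(2) by (intro AE_I2) (simp add: abs_of_nonneg)
  qed measurable
  have hexp_le: "h \<omega> * exp (t \<omega> * E \<omega>) \<le> h \<omega> + h \<omega> * t \<omega> * E \<omega> + h \<omega> * R \<omega>" for \<omega>
  proof -
    have "exp (t \<omega> * E \<omega>) \<le> 1 + t \<omega> * E \<omega> + R \<omega>"
      using exp_le_rem[of "t \<omega> * E \<omega>"] unfolding R_def by simp
    hence "h \<omega> * exp (t \<omega> * E \<omega>) \<le> h \<omega> * (1 + t \<omega> * E \<omega> + R \<omega>)"
      using h01[of \<omega>] by (intro mult_left_mono) auto
    thus ?thesis by (simp add: algebra_simps)
  qed
  have hexp_int: "integrable M (\<lambda>\<omega>. h \<omega> * exp (t \<omega> * E \<omega>))"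
  proof (rule Bochner_Integration.integrable_bound[where f="\<lambda>\<omega>. h \<omega> + \<bar>h \<omega> * t \<omega> * E \<omega>\<bar> + h \<omega> * R \<omega>"])
    show "integrable M (\<lambda>\<omega>. h \<omega> + \<bar>h \<omega> * t \<omega> * E \<omega>\<bar> + h \<omega> * R \<omega>)"
      using h_int int_htE hR_int by auto
    show "AE \<omega> in M. norm (h \<omega> * exp (t \<omega> * E \<omega>)) \<le> norm (h \<omega> + \<bar>h \<omega> * t \<omega> * E \<omega>\<bar> + h \<omega> * R \<omega>)"
    proof (intro AE_I2)
      fix \<omega>
      have a: "0 \<le> h \<omega> * exp (t \<omega> * E \<omega>)" using h01[of \<omega>] by simp
      have b: "0 \<le> h \<omega> * R \<omega>" using h01[of \<omega>] R0[of \<omega>] by simp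
      have c: "h \<omega> * exp (t \<omega> * E \<omega>) \<le> h \<omega> + \<bar>h \<omega> * t \<omega> * E \<omega>\<bar> + h \<omega> * R \<omega>"
        using hexp_le[of \<omega>] abs_ge_self[of "h \<omega> * t \<omega> * E \<omega>"] by linarith
      have d: "0 \<le> h \<omega> + \<bar>h \<omega> * t \<omega> * E \<omega>\<bar> + h \<omega> * R \<omega>" using h0[of \<omega>] b by simp
      show "norm (h \<omega> * exp (t \<omega> * E \<omega>)) \<le> norm (h \<omega> + \<bar>h \<omega> * t \<omega> * E \<omega>\<bar> + h \<omega> * R \<omega>)"
        unfolding real_norm_def abs_of_nonneg[OF a] abs_of_nonneg[OF d] by (rule c)
    qed
  qed measurable
  have "(\<integral>\<omega>. h \<omega> * exp (t \<omega> * E \<omega>) \<partial>M) \<le> (\<integral>\<omega>. h \<omega> + h \<omega> * t \<omega> * E \<omega> + h \<omega> * R \<omega> \<partial>M)"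
    by (rule integral_mono[OF hexp_int]) (use h_int int_htE hR_int hexp_le in auto)
  also have "\<dots> = (\<integral>\<omega>. h \<omega> \<partial>M) + (\<integral>\<omega>. h \<omega> * R \<omega> \<partial>M)"
    using h_int int_htE hR_int E0 by simp
  finally have int_le: "(\<integral>\<omega>. h \<omega> * exp (t \<omega> * E \<omega>) \<partial>M) \<le> (\<integral>\<omega>. h \<omega> \<partial>M) + (\<integral>\<omega>. h \<omega> * R \<omega> \<partial>M)" .
  have LHS: "(\<integral>\<^sup>+\<omega>. ennreal (exp (-((g (X \<omega>))^2 - 2*(Y \<omega> - fstar (X \<omega>))*g (X \<omega>))/\<gamma>)) \<partial>M)
      = (\<integral>\<^sup>+\<omega>. ennreal (h \<omega> * exp (t \<omega> * E \<omega>)) \<partial>M)"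
  proof (intro nn_integral_cong arg_cong[where f=ennreal])
    fix \<omega>
    have "-((g (X \<omega>))^2 - 2*(Y \<omega> - fstar (X \<omega>))*g (X \<omega>))/\<gamma> = -((G \<omega>)^2/\<gamma>) + t \<omega> * E \<omega>"
      unfolding G_def[symmetric] E_def[symmetric] t_def by (simp add: add_divide_distrib diff_divide_distrib)
    thus "exp (-((g (X \<omega>))^2 - 2*(Y \<omega> - fstar (X \<omega>))*g (X \<omega>))/\<gamma>) = h \<omega> * exp (t \<omega> * E \<omega>)"
      unfolding h_def exp_add[symmetric] by (rule arg_cong[where f=exp])
  qed
  have "(\<integral>\<^sup>+\<omega>. ennreal (h \<omega> * exp (t \<omega> * E \<omega>)) \<partial>M) = ennreal (\<integral>\<omega>. h \<omega> * exp (t \<omega> * E \<omega>) \<partial>M)"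
    by (rule nn_integral_eq_integral[OF hexp_int]) (intro AE_I2, simp add: h0)
  also have "\<dots> \<le> ennreal ((\<integral>\<omega>. h \<omega> \<partial>M) + (\<integral>\<omega>. h \<omega> * R \<omega> \<partial>M))"
    using int_le by (rule ennreal_leI)
  also have "\<dots> = (\<integral>\<^sup>+\<omega>. ennreal (h \<omega>) \<partial>M) + (\<integral>\<^sup>+\<omega>. ennreal (h \<omega> * R \<omega>) \<partial>M)"
  proof -
    have i1: "(\<integral>\<^sup>+\<omega>. ennreal (h \<omega>) \<partial>M) = ennreal (\<integral>\<omega>. h \<omega> \<partial>M)"
      by (rule nn_integral_eq_integral[OF h_int]) (intro AE_I2, simp add: h0)
    have i2: "(\<integral>\<^sup>+\<omega>. ennreal (h \<omega> * R \<omega>) \<partial>M) = ennreal (\<integral>\<omega>. h \<omega> * R \<omega> \<partial>M)"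
      by (rule nn_integral_eq_integral[OF hR_int]) (intro AE_I2, simp add: h0 R0)
    have p1: "0 \<le> (\<integral>\<omega>. h \<omega> \<partial>M)" by (intro integral_nonneg_AE AE_I2) (simp add: h0)
    have p2: "0 \<le> (\<integral>\<omega>. h \<omega> * R \<omega> \<partial>M)" by (intro integral_nonneg_AE AE_I2) (simp add: h0 R0)
    show ?thesis unfolding i1 i2 using p1 p2 by (simp add: ennreal_plus)
  qed
  also have "\<dots> \<le> (\<integral>\<^sup>+\<omega>. ennreal (h \<omega>) \<partial>M) + (\<integral>\<^sup>+\<omega>. ennreal (h \<omega> * q \<omega>) \<partial>M)"
    using A1 by (rule add_left_mono)
  also have "\<dots> = (\<integral>\<^sup>+\<omega>. ennreal (h \<omega>) + ennreal (h \<omega> * q \<omega>) \<partial>M)"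
    by (rule nn_integral_add[symmetric]) measurable
  also have "\<dots> \<le> (\<integral>\<^sup>+\<omega>. ennreal (exp (-((g (X \<omega>))^2/((1+\<delta>2)*\<gamma>)))) \<partial>M)"
  proof (rule nn_integral_mono)
    fix \<omega> assume w: "\<omega> \<in> space M"
    have "h \<omega> + h \<omega> * q \<omega> = exp (-((G \<omega>)^2/\<gamma>)) * (1 + (2*G \<omega>/\<gamma>)^2*\<sigma>^2/(2*(1 - \<bar>2*G \<omega>/\<gamma>\<bar>*\<eta>)))"
      unfolding h_def q_def t_def by (simp add: distrib_left)
    also have "\<dots> \<le> exp (-((G \<omega>)^2/((1+\<delta>2)*\<gamma>)))"
      by (rule pointwise_A[OF gam d2 Gb[OF w] eta_pos gb gs])
    finally have "h \<omega> + h \<omega> * q \<omega> \<le> exp (-((g (X \<omega>))^2/((1+\<delta>2)*\<gamma>)))" by (simp add: G_def)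
    thus "ennreal (h \<omega>) + ennreal (h \<omega> * q \<omega>) \<le> ennreal (exp (-((g (X \<omega>))^2/((1+\<delta>2)*\<gamma>))))"
      using h0[of \<omega>] q0[OF w] by (simp add: ennreal_plus[symmetric] del: ennreal_plus)
  qed
  finally show ?thesis unfolding LHS .
qed

lemma partB:
  fixes M :: "'w measure" and X :: "'w \<Rightarrow> real ^ 'd" and g :: "real ^ 'd \<Rightarrow> real"
  assumes prob: "prob_space M"
    and X_meas: "X \<in> borel_measurable M"
    and X_cube: "\<forall>\<omega>\<in>space M. X \<omega> \<in> cube"
    and g_meas: "g \<in> borel_measurable borel" and g_bd: "\<forall>x\<in>cube. \<bar>g x\<bar> \<le> b"
    and d1: "\<delta>1 > 0" and u0: "u \<ge> 0"
    and ub: "u * b^2 \<le> 4*\<delta>1*(1+\<delta>1)/(2+\<delta>1)^2"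
  shows "(\<integral>\<^sup>+\<omega>. ennreal (exp (u/(1+\<delta>1) * (g (X \<omega>))^2)) \<partial>M)
         * (\<integral>\<^sup>+\<omega>. ennreal (exp (-(u * (g (X \<omega>))^2))) \<partial>M) \<le> 1"
proof -
  interpret prob_space M by (rule prob)
  note [measurable] = X_meas g_meas
  define a where "a \<omega> = (g (X \<omega>))^2" for \<omega>
  have a_meas[measurable]: "a \<in> borel_measurable M" unfolding a_def by measurable
  define K where "K = b^2"
  have a0: "0 \<le> a \<omega>" for \<omega> by (simp add: a_def)
  have aK: "a \<omega> \<le> K" if "\<omega> \<in> space M" for \<omega>
  proof -
    have "\<bar>g (X \<omega>)\<bar> \<le> b" using that X_cube g_bd by simp
    thus ?thesis unfolding a_def K_def by (metis abs_ge_zero order_trans power2_abs power_mono)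
  qed
  show ?thesis
  proof (cases "K = 0")
    case True
    have "a \<omega> = 0" if "\<omega> \<in> space M" for \<omega> using aK[OF that] a0[of \<omega>] True by simp
    hence z: "(g (X \<omega>))^2 = 0" if "\<omega> \<in> space M" for \<omega> using that by (simp add: a_def)
    have "(\<integral>\<^sup>+\<omega>. ennreal (exp (u/(1+\<delta>1) * (g (X \<omega>))^2)) \<partial>M) = (\<integral>\<^sup>+\<omega>. 1 \<partial>M)"
      by (intro nn_integral_cong) (simp add: z)
    moreover have "(\<integral>\<^sup>+\<omega>. ennreal (exp (-(u * (g (X \<omega>))^2))) \<partial>M) = (\<integral>\<^sup>+\<omega>. 1 \<partial>M)"
      by (intro nn_integral_cong) (simp add: z)
    ultimately show ?thesis by (simp add: emeasure_space_1)
  next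
    case False
    hence Kpos: "K > 0" unfolding K_def by simp
    define r where "r = u/(1+\<delta>1)"
    define A where "A = exp (r*K) - 1"
    define C where "C = exp (-(u*K)) - 1"
    have a_int: "integrable M a"
      by (rule integrable_const_bound[where B=K]) (use aK a0 in auto)
    define p where "p = (\<integral>\<omega>. a \<omega> \<partial>M) / K"
    have p0: "0 \<le> p" unfolding p_def using Kpos by (intro divide_nonneg_pos integral_nonneg_AE AE_I2) (auto simp: a0)
    have p1: "p \<le> 1"
    proof -
      have "(\<integral>\<omega>. a \<omega> \<partial>M) \<le> (\<integral>\<omega>. K \<partial>M)" by (rule integral_mono_AE) (use a_int aK in auto)
      thus ?thesis unfolding p_def using Kpos by (simp add: prob_space)
    qed
    have chord: "exp (v * a \<omega>) \<le> 1 + (a \<omega> / K) * (exp (v * K) - 1)" if w: "\<omega> \<in> space M" for v \<omega>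
    proof -
      have s0: "0 \<le> a \<omega> / K" "a \<omega> / K \<le> 1" using a0[of \<omega>] aK[OF w] Kpos by auto
      have "exp (v * a \<omega>) = exp ((a \<omega> / K) * (v * K))" using Kpos by simp
      also have "\<dots> \<le> (1 - a \<omega> / K) + (a \<omega> / K) * exp (v * K)" by (rule exp_chord[OF s0])
      finally show ?thesis by (simp add: algebra_simps)
    qed
    have bound: "(\<integral>\<^sup>+\<omega>. ennreal (exp (v * a \<omega>)) \<partial>M) \<le> ennreal (1 + p * (exp (v * K) - 1))" for v
    proof -
      have i1: "integrable M (\<lambda>\<omega>. 1 + (a \<omega> / K) * (exp (v * K) - 1))" using a_int by simp
      have "(\<integral>\<^sup>+\<omega>. ennreal (exp (v * a \<omega>)) \<partial>M) \<le> (\<integral>\<^sup>+\<omega>. ennreal (1 + (a \<omega> / K) * (exp (v * K) - 1)) \<partial>M)"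
        by (intro nn_integral_mono ennreal_leI chord)
      also have "\<dots> = ennreal (\<integral>\<omega>. 1 + (a \<omega> / K) * (exp (v * K) - 1) \<partial>M)"
      proof (rule nn_integral_eq_integral[OF i1], intro AE_I2)
        fix \<omega> assume w: "\<omega> \<in> space M"
        show "0 \<le> 1 + (a \<omega> / K) * (exp (v * K) - 1)" using chord[OF w, of v] by (meson exp_ge_zero order_trans)
      qed
      also have "(\<integral>\<omega>. 1 + (a \<omega> / K) * (exp (v * K) - 1) \<partial>M) = 1 + p * (exp (v * K) - 1)"
        using a_int by (simp add: p_def prob_space)
      finally show ?thesis .
    qed
    have e1: "(\<integral>\<^sup>+\<omega>. ennreal (exp (u/(1+\<delta>1) * (g (X \<omega>))^2)) \<partial>M) = (\<integral>\<^sup>+\<omega>. ennreal (exp (r * a \<omega>)) \<partial>M)"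
      by (simp add: r_def a_def)
    have e2: "(\<integral>\<^sup>+\<omega>. ennreal (exp (-(u * (g (X \<omega>))^2))) \<partial>M) = (\<integral>\<^sup>+\<omega>. ennreal (exp ((-u) * a \<omega>)) \<partial>M)"
      by (simp add: a_def)
    have A0: "A \<ge> 0" unfolding A_def r_def using u0 Kpos d1 by simp
    have C0: "C \<le> 0" "C \<ge> -1" unfolding C_def using u0 Kpos by auto
    have AC: "A + C \<le> 0"
    proof -
      have "exp ((u*K)/(1+\<delta>1)) + exp (-(u*K)) \<le> 2"
        by (rule scalar_B[OF d1]) (use u0 Kpos ub in \<open>auto simp: K_def\<close>)
      thus ?thesis unfolding A_def C_def r_def by (simp add: mult.commute)
    qed
    have n1: "0 \<le> 1 + p * A" using p0 A0 by simp
    have n2: "0 \<le> 1 + p * C"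
    proof -
      have "p * C \<ge> p * (-1)" using p0 C0 by (intro mult_left_mono) auto
      thus ?thesis using p1 by simp
    qed
    have "(\<integral>\<^sup>+\<omega>. ennreal (exp (r * a \<omega>)) \<partial>M) * (\<integral>\<^sup>+\<omega>. ennreal (exp ((-u) * a \<omega>)) \<partial>M)
        \<le> ennreal (1 + p * A) * ennreal (1 + p * C)"
      unfolding A_def C_def using bound[of r] bound[of "-u"] by (intro mult_mono) auto
    also have "\<dots> = ennreal ((1 + p * A) * (1 + p * C))" using n1 n2 by (simp add: ennreal_mult)
    also have "\<dots> \<le> 1" using prod_le_one[OF p0 p1 A0 C0(1) AC] by (simp add: ennreal_le_1)
    finally show ?thesis unfolding e1 e2 .
  qed
qed

lemma indep_prod:
  fixes M :: "'w measure"
    and X :: "'w \<Rightarrow> real ^ 'd" and Y :: "'w \<Rightarrow> real"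
    and Xs Xs' :: "nat \<Rightarrow> 'w \<Rightarrow> real ^ 'd" and Ys :: "nat \<Rightarrow> 'w \<Rightarrow> real"
    and \<Phi> :: "(real ^ 'd) \<times> real \<Rightarrow> real" and \<Psi> :: "real ^ 'd \<Rightarrow> real"
  assumes prob: "prob_space M"
    and X_meas: "X \<in> borel_measurable M" and Y_meas: "Y \<in> borel_measurable M"
    and Xs_meas: "\<forall>i<n. Xs i \<in> borel_measurable M \<and> Xs' i \<in> borel_measurable M \<and> Ys i \<in> borel_measurable M"
    and indep: "prob_space.indep_vars M (\<lambda>_. borel)
        (\<lambda>j \<omega>. case j of Inl i \<Rightarrow> (Xs i \<omega>, Ys i \<omega>) | Inr i \<Rightarrow> (Xs' i \<omega>, 0::real))
        (Inl ` {..<n} \<union> Inr ` {..<n})"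
    and ident_data: "\<forall>i<n. distr M borel (\<lambda>\<omega>. (Xs i \<omega>, Ys i \<omega>)) = distr M borel (\<lambda>\<omega>. (X \<omega>, Y \<omega>))"
    and ident_ghost: "\<forall>i<n. distr M borel (Xs' i) = distr M borel X"
    and Phi_meas: "\<Phi> \<in> borel_measurable borel" and Psi_meas: "\<Psi> \<in> borel_measurable borel"
    and Phi0: "\<And>z. \<Phi> z \<ge> 0" and Psi0: "\<And>x. \<Psi> x \<ge> 0"
    and le1: "(\<integral>\<^sup>+\<omega>. ennreal (\<Psi> (X \<omega>)) \<partial>M) * (\<integral>\<^sup>+\<omega>. ennreal (\<Phi> (X \<omega>, Y \<omega>)) \<partial>M) \<le> 1"
  shows "(\<integral>\<^sup>+\<omega>. ennreal ((\<Prod>i<n. \<Psi> (Xs' i \<omega>)) * (\<Prod>i<n. \<Phi> (Xs i \<omega>, Ys i \<omega>))) \<partial>M) \<le> 1"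
proof -
  interpret prob_space M by (rule prob)
  note [measurable] = X_meas Y_meas Phi_meas Psi_meas
  define J where "J = Inl ` {..<n} \<union> (Inr ` {..<n} :: (nat + nat) set)"
  define Z where "Z = (\<lambda>j \<omega>. case j of Inl i \<Rightarrow> (Xs i \<omega>, Ys i \<omega>) | Inr i \<Rightarrow> (Xs' i \<omega>, 0::real))"
  define \<kappa> where "\<kappa> = (\<lambda>j (z :: (real ^ 'd) \<times> real). case j of Inl (i::nat) \<Rightarrow> ennreal (\<Phi> z) | Inr (i::nat) \<Rightarrow> ennreal (\<Psi> (fst z)))"
  have finJ: "finite J" by (simp add: J_def)
  have fstm: "fst \<in> measurable (borel :: ((real ^ 'd) \<times> real) measure) borel"
    using measurable_fst[of "borel :: (real ^ 'd) measure" "borel :: real measure"] by (simp add: borel_prod)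
  have kmeas: "\<kappa> j \<in> borel_measurable borel" for j
  proof (cases j)
    case (Inr i)
    have "(\<lambda>z. \<Psi> (fst z)) \<in> borel_measurable (borel :: ((real ^ 'd) \<times> real) measure)"
      by (rule measurable_compose[OF fstm Psi_meas])
    thus ?thesis by (simp add: \<kappa>_def Inr)
  qed (simp add: \<kappa>_def)
  have ind2: "indep_vars (\<lambda>_. borel) (\<lambda>j \<omega>. \<kappa> j (Z j \<omega>)) J"
    using indep_vars_compose2[OF indep[folded Z_def J_def], of \<kappa> "\<lambda>_. borel"] kmeas by simp
  have prodeq: "(\<integral>\<^sup>+\<omega>. (\<Prod>j\<in>J. \<kappa> j (Z j \<omega>)) \<partial>M) = (\<Prod>j\<in>J. \<integral>\<^sup>+\<omega>. \<kappa> j (Z j \<omega>) \<partial>M)"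
    by (rule indep_vars_nn_integral[OF finJ ind2]) simp
  have disj: "Inl ` {..<n} \<inter> (Inr ` {..<n} :: (nat + nat) set) = {}" by auto
  have split: "(\<Prod>j\<in>J. H j) = (\<Prod>i<n. H (Inl i)) * (\<Prod>i<n. H (Inr i))" for H :: "nat + nat \<Rightarrow> ennreal"
    unfolding J_def by (subst prod.union_disjoint) (auto simp: prod.reindex)
  have lhs: "ennreal ((\<Prod>i<n. \<Psi> (Xs' i \<omega>)) * (\<Prod>i<n. \<Phi> (Xs i \<omega>, Ys i \<omega>))) = (\<Prod>j\<in>J. \<kappa> j (Z j \<omega>))" for \<omega>
    unfolding split using Phi0 Psi0
    by (simp add: \<kappa>_def Z_def prod_ennreal ennreal_mult prod_nonneg mult.commute)
  have dXY: "(\<integral>\<^sup>+\<omega>. ennreal (\<Phi> (Xs i \<omega>, Ys i \<omega>)) \<partial>M) = (\<integral>\<^sup>+\<omega>. ennreal (\<Phi> (X \<omega>, Y \<omega>)) \<partial>M)" if i: "i < n" for i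
  proof -
    have [measurable]: "Xs i \<in> borel_measurable M" "Ys i \<in> borel_measurable M" using Xs_meas i by auto
    have "(\<integral>\<^sup>+\<omega>. ennreal (\<Phi> (Xs i \<omega>, Ys i \<omega>)) \<partial>M) = (\<integral>\<^sup>+z. ennreal (\<Phi> z) \<partial>distr M borel (\<lambda>\<omega>. (Xs i \<omega>, Ys i \<omega>)))"
      by (rule nn_integral_distr[symmetric]) measurable
    also have "\<dots> = (\<integral>\<^sup>+z. ennreal (\<Phi> z) \<partial>distr M borel (\<lambda>\<omega>. (X \<omega>, Y \<omega>)))" using ident_data i by simp
    also have "\<dots> = (\<integral>\<^sup>+\<omega>. ennreal (\<Phi> (X \<omega>, Y \<omega>)) \<partial>M)"
      by (rule nn_integral_distr) measurable
    finally show ?thesis .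
  qed
  have dX: "(\<integral>\<^sup>+\<omega>. ennreal (\<Psi> (Xs' i \<omega>)) \<partial>M) = (\<integral>\<^sup>+\<omega>. ennreal (\<Psi> (X \<omega>)) \<partial>M)" if i: "i < n" for i
  proof -
    have [measurable]: "Xs' i \<in> borel_measurable M" using Xs_meas i by auto
    have "(\<integral>\<^sup>+\<omega>. ennreal (\<Psi> (Xs' i \<omega>)) \<partial>M) = (\<integral>\<^sup>+z. ennreal (\<Psi> z) \<partial>distr M borel (Xs' i))"
      by (rule nn_integral_distr[symmetric]) measurable
    also have "\<dots> = (\<integral>\<^sup>+z. ennreal (\<Psi> z) \<partial>distr M borel X)" using ident_ghost i by simp
    also have "\<dots> = (\<integral>\<^sup>+\<omega>. ennreal (\<Psi> (X \<omega>)) \<partial>M)"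
      by (rule nn_integral_distr) measurable
    finally show ?thesis .
  qed
  have "(\<integral>\<^sup>+\<omega>. ennreal ((\<Prod>i<n. \<Psi> (Xs' i \<omega>)) * (\<Prod>i<n. \<Phi> (Xs i \<omega>, Ys i \<omega>))) \<partial>M)
      = (\<Prod>j\<in>J. \<integral>\<^sup>+\<omega>. \<kappa> j (Z j \<omega>) \<partial>M)" unfolding lhs prodeq ..
  also have "\<dots> = (\<Prod>i<n. \<integral>\<^sup>+\<omega>. ennreal (\<Phi> (Xs i \<omega>, Ys i \<omega>)) \<partial>M) * (\<Prod>i<n. \<integral>\<^sup>+\<omega>. ennreal (\<Psi> (Xs' i \<omega>)) \<partial>M)"
    unfolding split by (simp add: \<kappa>_def Z_def)
  also have "\<dots> = (\<integral>\<^sup>+\<omega>. ennreal (\<Phi> (X \<omega>, Y \<omega>)) \<partial>M)^n * (\<integral>\<^sup>+\<omega>. ennreal (\<Psi> (X \<omega>)) \<partial>M)^n"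
    using dXY dX by simp
  also have "\<dots> = ((\<integral>\<^sup>+\<omega>. ennreal (\<Psi> (X \<omega>)) \<partial>M) * (\<integral>\<^sup>+\<omega>. ennreal (\<Phi> (X \<omega>, Y \<omega>)) \<partial>M))^n"
    by (simp add: power_mult_distrib mult.commute)
  also have "\<dots> \<le> 1" using le1 by (intro power_le_one) auto
  finally show ?thesis .
qed

lemma Sup_unbdd_real: "\<not> bdd_above (A :: real set) \<Longrightarrow> Sup A = Sup (UNIV :: real set)"
proof -
  assume a: "\<not> bdd_above A"
  have "(\<lambda>z. \<forall>x\<in>A. x \<le> z) = (\<lambda>z. \<forall>x\<in>UNIV. x \<le> (z::real))"
    using a unfolding bdd_above_def by (auto intro!: ext)
  thus ?thesis unfolding Sup_real_def by simp
qed

lemma sup_meas: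
  fixes T :: "'f \<Rightarrow> 'w \<Rightarrow> real"
  assumes F: "countable F" "F \<noteq> {}" and Tm: "\<And>f. f \<in> F \<Longrightarrow> T f \<in> borel_measurable M"
  shows "(\<lambda>\<omega>. SUP f\<in>F. T f \<omega>) \<in> borel_measurable M"
proof -
  define se where "se \<omega> = (SUP f\<in>F. ereal (T f \<omega>))" for \<omega>
  have sem[measurable]: "se \<in> borel_measurable M" unfolding se_def
    by (rule borel_measurable_SUP[OF F(1)]) (use Tm in measurable)
  have eq: "(SUP f\<in>F. T f \<omega>) = (if se \<omega> < \<infinity> then real_of_ereal (se \<omega>) else Sup (UNIV :: real set))" for \<omega>
  proof (cases "bdd_above ((\<lambda>f. T f \<omega>) ` F)")
    case True
    then obtain K where K: "\<And>f. f \<in> F \<Longrightarrow> T f \<omega> \<le> K" by (auto simp: bdd_above_def)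
    have "se \<omega> \<le> ereal K" unfolding se_def using K by (intro SUP_least) auto
    hence lt: "se \<omega> < \<infinity>" by auto
    obtain f0 where f0: "f0 \<in> F" using F(2) by auto
    have "ereal (T f0 \<omega>) \<le> se \<omega>" unfolding se_def using f0 by (intro SUP_upper)
    hence "se \<omega> \<noteq> -\<infinity>" by auto
    hence "\<bar>se \<omega>\<bar> \<noteq> \<infinity>" using lt by auto
    hence "ereal (SUP f\<in>F. T f \<omega>) = se \<omega>" unfolding se_def by (rule ereal_SUP)
    hence "(SUP f\<in>F. T f \<omega>) = real_of_ereal (se \<omega>)" by (metis real_of_ereal.simps(1))
    thus ?thesis using lt by auto
  next
    case False
    have "\<not> se \<omega> < \<infinity>"
    proof
      assume "se \<omega> < \<infinity>"
      then obtain K where "se \<omega> \<le> ereal K" by (cases "se \<omega>") auto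
      hence "\<And>f. f \<in> F \<Longrightarrow> T f \<omega> \<le> K" unfolding se_def by (meson SUP_le_iff ereal_less_eq(3))
      with False show False by (auto simp: bdd_above_def)
    qed
    thus ?thesis using Sup_unbdd_real[OF False] by simp
  qed
  show ?thesis unfolding eq by measurable
qed

lemma count_space_meas:
  fixes v :: "'f \<Rightarrow> 'w \<Rightarrow> ennreal"
  assumes F: "countable F" and vm: "\<And>f. f \<in> F \<Longrightarrow> v f \<in> borel_measurable M"
  shows "(\<lambda>\<omega>. \<integral>\<^sup>+f. v f \<omega> \<partial>count_space F) \<in> borel_measurable M"
proof (cases "finite F")
  case True
  show ?thesis unfolding nn_integral_count_space_finite[OF True]
    by (rule borel_measurable_sum) (rule vm)
next
  case False
  note * = bij_betw_from_nat_into[OF F False]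
  have eq: "(\<integral>\<^sup>+f. v f \<omega> \<partial>count_space F) = (\<Sum>k. v (from_nat_into F k) \<omega>)" for \<omega>
    by (simp add: nn_integral_bij_count_space[symmetric, OF *] nn_integral_count_space_nat)
  have fk: "from_nat_into F k \<in> F" for k using False by (intro from_nat_into) auto
  show ?thesis unfolding eq
  proof (rule borel_measurable_suminf_order)
    fix k show "v (from_nat_into F k) \<in> borel_measurable M" by (rule vm[OF fk])
  qed
qed

lemma count_space_le:
  fixes w :: "'f \<Rightarrow> real"
  assumes F: "countable F" and w0: "\<And>f. f \<in> F \<Longrightarrow> 0 \<le> w f"
    and sm: "w summable_on F" and le: "(\<Sum>\<^sub>\<infinity>f\<in>F. w f) \<le> 1"
  shows "(\<integral>\<^sup>+f. ennreal (w f) \<partial>count_space F) \<le> 1"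
proof -
  have sup: "ennreal (\<Sum>\<^sub>\<infinity>f\<in>F. w f) = (SUP G\<in>{G. finite G \<and> G \<subseteq> F}. ennreal (sum w G))"
    by (rule infsum_nonneg_is_SUPREMUM_ennreal[OF sm w0])
  have fin: "ennreal (sum w G) \<le> 1" if "finite G" "G \<subseteq> F" for G
  proof -
    have "ennreal (sum w G) \<le> ennreal (\<Sum>\<^sub>\<infinity>f\<in>F. w f)" unfolding sup using that by (intro SUP_upper) auto
    also have "\<dots> \<le> 1" using le by (simp add: ennreal_le_1)
    finally show ?thesis .
  qed
  show ?thesis
  proof (cases "finite F")
    case True
    have "(\<integral>\<^sup>+f. ennreal (w f) \<partial>count_space F) = ennreal (sum w F)"
      unfolding nn_integral_count_space_finite[OF True] using w0 by (simp add: sum_ennreal)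
    thus ?thesis using fin[OF True] by simp
  next
    case False
    note * = bij_betw_from_nat_into[OF F False]
    let ?e = "from_nat_into F"
    have eq: "(\<integral>\<^sup>+f. ennreal (w f) \<partial>count_space F) = (\<Sum>k. ennreal (w (?e k)))"
      by (simp add: nn_integral_bij_count_space[symmetric, OF *] nn_integral_count_space_nat)
    have "(\<Sum>k. ennreal (w (?e k))) \<le> 1"
    proof (rule suminf_le_const)
      fix N
      have inj: "inj_on ?e {..<N}" using * by (auto simp: bij_betw_def inj_on_def)
      have sub: "?e ` {..<N} \<subseteq> F" using * by (auto simp: bij_betw_def)
      have "(\<Sum>k<N. ennreal (w (?e k))) = ennreal (\<Sum>k<N. w (?e k))"
        using w0 sub by (intro sum_ennreal) auto
      also have "(\<Sum>k<N. w (?e k)) = sum w (?e ` {..<N})" by (simp add: sum.reindex[OF inj])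
      finally show "(\<Sum>k<N. ennreal (w (?e k))) \<le> 1" using fin[OF _ sub] by simp
    qed simp
    thus ?thesis unfolding eq .
  qed
qed

lemma ub_eq:
  fixes b d1 d2 :: real assumes bp: "b^2 > 0" and d1: "d1 > 0" and d2: "d2 > 0"
  shows "b^2 / ((1+d2) * (inverse (2*((1+d1)*(1+d2))) * (1+d1/2) * (1+2/d1) * b^2)) = 4*d1*(1+d1)/(2+d1)^2"
proof -
  have e: "(1+d1/2) * (1+2/d1) = (2+d1)^2/(2*d1)" using d1 by (simp add: field_simps power2_eq_square)
  have e2: "(1+d2) * inverse (2*((1+d1)*(1+d2))) = inverse (2*(1+d1))"
  proof -
    have "1+d2 \<noteq> 0" "1+d1 \<noteq> 0" using d1 d2 by auto
    have "inverse (2*((1+d1)*(1+d2))) = inverse (2*(1+d1)) * inverse (1+d2)"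
      by (metis mult.assoc inverse_mult_distrib)
    with \<open>1+d2 \<noteq> 0\<close> show ?thesis by simp
  qed
  have "(1+d2) * (inverse (2*((1+d1)*(1+d2))) * (1+d1/2) * (1+2/d1) * b^2)
      = ((1+d2) * inverse (2*((1+d1)*(1+d2)))) * ((1+d1/2) * (1+2/d1)) * b^2" by (simp add: mult.assoc)
  also have "\<dots> = b^2 * ((2+d1)^2/(4*d1*(1+d1)))" unfolding e e2 using d1 by (simp add: field_simps)
  finally have "(1+d2) * (inverse (2*((1+d1)*(1+d2))) * (1+d1/2) * (1+2/d1) * b^2) = b^2 * ((2+d1)^2/(4*d1*(1+d1)))" .
  moreover have "(2+d1)^2 > 0" "4*d1*(1+d1) > 0" using d1 by auto
  ultimately show ?thesis using bp by simp
qed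

lemma cube_borel: "cube \<in> sets (borel :: (real ^ 'd) measure)"
  unfolding cube_def by measurable

theorem theorem4:
  fixes M :: "'w measure"
    and X :: "'w \<Rightarrow> real ^ 'd" and Y :: "'w \<Rightarrow> real"
    and Xs Xs' :: "nat \<Rightarrow> 'w \<Rightarrow> real ^ 'd" and Ys :: "nat \<Rightarrow> 'w \<Rightarrow> real"
    and fstar :: "real ^ 'd \<Rightarrow> real"
    and F :: "(real ^ 'd \<Rightarrow> real) set" and L :: "(real ^ 'd \<Rightarrow> real) \<Rightarrow> real"
    and n :: nat and B Bn \<sigma> \<eta> \<delta>1 \<delta>2 :: real
  assumes prob: "prob_space M"
    and n_pos: "n \<ge> 1"
    \<comment> \<open>the generic pair (X,Y)\<close>
    and X_meas: "X \<in> borel_measurable M" and Y_meas: "Y \<in> borel_measurable M"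
    and X_cube: "\<forall>\<omega>\<in>space M. X \<omega> \<in> cube"
    and Y_int: "integrable M Y"
    \<comment> \<open>regression function f* = E[Y | X], bounded by B\<close>
    and fstar_meas: "fstar \<in> borel_measurable borel"
    and fstar_bd: "\<forall>x\<in>cube. \<bar>fstar x\<bar> \<le> B"
    and fstar_reg: "AE \<omega> in M. fstar (X \<omega>) = real_cond_exp M (sigma_of M X) Y \<omega>"
    \<comment> \<open>noise: V(eps | X) = E[eps^2 | X] <= sigma^2 (E[eps|X] = 0), and the Bernstein condition\<close>
    and noise_var: "AE \<omega> in M.
        nn_cond_exp M (sigma_of M X) (\<lambda>\<omega>. ennreal ((Y \<omega> - fstar (X \<omega>))^2)) \<omega> \<le> ennreal (\<sigma>^2)"
    and eta_pos: "\<eta> > 0"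
    and bernstein: "\<forall>k::nat. k \<ge> 3 \<longrightarrow> (AE \<omega> in M.
        nn_cond_exp M (sigma_of M X) (\<lambda>\<omega>. ennreal (\<bar>Y \<omega> - fstar (X \<omega>)\<bar> ^ k)) \<omega>
        \<le> ennreal (fact k * \<eta> ^ (k - 2) / 2)
           * nn_cond_exp M (sigma_of M X) (\<lambda>\<omega>. ennreal ((Y \<omega> - fstar (X \<omega>))^2)) \<omega>)"
    \<comment> \<open>data (Xs i, Ys i), i<n, and ghost sample Xs' i, i<n: all mutually independent\<close>
    and Xs_meas: "\<forall>i<n. Xs i \<in> borel_measurable M \<and> Xs' i \<in> borel_measurable M \<and> Ys i \<in> borel_measurable M"
    and indep: "prob_space.indep_vars M (\<lambda>_. borel)
        (\<lambda>j \<omega>. case j of Inl i \<Rightarrow> (Xs i \<omega>, Ys i \<omega>) | Inr i \<Rightarrow> (Xs' i \<omega>, 0::real))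
        (Inl ` {..<n} \<union> Inr ` {..<n})"
    and ident_data: "\<forall>i<n. distr M borel (\<lambda>\<omega>. (Xs i \<omega>, Ys i \<omega>)) = distr M borel (\<lambda>\<omega>. (X \<omega>, Y \<omega>))"
    and ident_ghost: "\<forall>i<n. distr M borel (Xs' i) = distr M borel X"
    \<comment> \<open>the countable class F and the penalty L\<close>
    and Bn_ge: "Bn \<ge> B"
    and F_count: "countable F" and F_ne: "F \<noteq> {}"
    and F_meas: "\<forall>f\<in>F. f \<in> borel_measurable borel"
    and F_bd: "\<forall>f\<in>F. \<forall>x\<in>cube. \<bar>f x\<bar> \<le> Bn"
    and L_nonneg: "\<forall>f\<in>F. L f \<ge> 0"
    and L_summable: "(\<lambda>f. exp (- L f)) summable_on F"
    and L_sum: "(\<Sum>\<^sub>\<infinity>f\<in>F. exp (- L f)) \<le> 1"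
    and d1: "\<delta>1 > 0" and d2: "\<delta>2 > 0"
  shows "integrable M (\<lambda>\<omega>. SUP f\<in>F.
            Dn' n (\<lambda>i. Xs' i \<omega>) f fstar - tau \<delta>1 \<delta>2 * Pn n (\<lambda>i. Xs i \<omega>) (\<lambda>i. Ys i \<omega>) f fstar
            - tau \<delta>1 \<delta>2 * gamma_n \<delta>1 \<delta>2 B Bn \<sigma> \<eta> * L f / real n)
       \<and> (\<integral>\<omega>. (SUP f\<in>F.
            Dn' n (\<lambda>i. Xs' i \<omega>) f fstar - tau \<delta>1 \<delta>2 * Pn n (\<lambda>i. Xs i \<omega>) (\<lambda>i. Ys i \<omega>) f fstar
            - tau \<delta>1 \<delta>2 * gamma_n \<delta>1 \<delta>2 B Bn \<sigma> \<eta> * L f / real n) \<partial>M) \<le> 0"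
proof -
  interpret P: prob_space M by (rule prob)
  note [measurable] = X_meas Y_meas fstar_meas
  define \<tau> where "\<tau> = tau \<delta>1 \<delta>2"
  define \<gamma> where "\<gamma> = gamma_n \<delta>1 \<delta>2 B Bn \<sigma> \<eta>"
  define b where "b = B + Bn"
  define \<gamma>1 where "\<gamma>1 = inverse (2*\<tau>) * (1+\<delta>1/2) * (1+2/\<delta>1) * b^2"
  define T where "T f \<omega> = Dn' n (\<lambda>i. Xs' i \<omega>) f fstar - \<tau> * Pn n (\<lambda>i. Xs i \<omega>) (\<lambda>i. Ys i \<omega>) f fstar
            - \<tau> * \<gamma> * L f / real n" for f \<omega>
  have tau_pos: "\<tau> > 0" using d1 d2 by (simp add: \<tau>_def tau_def)
  have cube0: "(0::real^'d) \<in> cube" by (simp add: cube_def)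
  have B0: "B \<ge> 0" using fstar_bd cube0 by force
  have b0: "b \<ge> 0" using B0 Bn_ge by (simp add: b_def)
  have g1_0: "\<gamma>1 \<ge> 0" using tau_pos d1 by (simp add: \<gamma>1_def)
  have geq: "\<gamma> = \<gamma>1 + 2*(1+1/\<delta>2)*\<sigma>^2 + 2*b*\<eta>"
    by (simp add: \<gamma>_def \<gamma>1_def gamma_n_def \<tau>_def b_def)
  have sig0: "2*(1+1/\<delta>2)*\<sigma>^2 \<ge> 0" using d2 by simp
  have beta0: "2*b*\<eta> \<ge> 0" using b0 eta_pos by simp
  have g0: "\<gamma> \<ge> 0" using geq g1_0 sig0 beta0 by linarith
  have n0: "real n > 0" using n_pos by simp
  have Xs_m: "Xs i \<in> borel_measurable M" "Xs' i \<in> borel_measurable M" "Ys i \<in> borel_measurable M" if "i < n" for i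
    using Xs_meas that by auto
  have Tm: "T f \<in> borel_measurable M" if f: "f \<in> F" for f
  proof -
    have fm[measurable]: "f \<in> borel_measurable borel" using F_meas f by auto
    have s1: "(\<lambda>\<omega>. \<Sum>i<n. (f (Xs' i \<omega>) - fstar (Xs' i \<omega>))^2) \<in> borel_measurable M"
    proof (rule borel_measurable_sum)
      fix i assume "i \<in> {..<n}"
      hence [measurable]: "Xs' i \<in> borel_measurable M" using Xs_m by auto
      show "(\<lambda>\<omega>. (f (Xs' i \<omega>) - fstar (Xs' i \<omega>))^2) \<in> borel_measurable M" by measurable
    qed
    have s2: "(\<lambda>\<omega>. \<Sum>i<n. (Ys i \<omega> - f (Xs i \<omega>))^2 - (Ys i \<omega> - fstar (Xs i \<omega>))^2) \<in> borel_measurable M"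
    proof (rule borel_measurable_sum)
      fix i assume "i \<in> {..<n}"
      hence [measurable]: "Xs i \<in> borel_measurable M" "Ys i \<in> borel_measurable M" using Xs_m by auto
      show "(\<lambda>\<omega>. (Ys i \<omega> - f (Xs i \<omega>))^2 - (Ys i \<omega> - fstar (Xs i \<omega>))^2) \<in> borel_measurable M" by measurable
    qed
    show ?thesis unfolding T_def Dn'_def Pn_def using s1 s2 by measurable
  qed
  have supm: "(\<lambda>\<omega>. SUP f\<in>F. T f \<omega>) \<in> borel_measurable M"
    by (rule sup_meas[OF F_count F_ne Tm])
  have cubeAE: "AE \<omega> in M. Xs i \<omega> \<in> cube \<and> Xs' i \<omega> \<in> cube" if i: "i < n" for i
  proof -
    have [measurable]: "Xs i \<in> borel_measurable M" "Xs' i \<in> borel_measurable M" "Ys i \<in> borel_measurable M"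
      using Xs_m i by auto
    have cb[measurable]: "cube \<in> sets (borel :: (real ^ 'd) measure)" by (rule cube_borel)
    have fstm: "fst \<in> measurable (borel :: ((real ^ 'd) \<times> real) measure) borel"
      using measurable_fst[of "borel :: (real ^ 'd) measure" "borel :: real measure"] by (simp add: borel_prod)
    have cb2: "{z \<in> space (borel :: ((real ^ 'd) \<times> real) measure). fst z \<in> cube} \<in> sets borel"
      using measurable_sets[OF fstm cb] by (simp add: vimage_def Int_def conj_commute)
    have cb3: "{z. fst z \<in> cube} \<in> sets (borel :: ((real ^ 'd) \<times> real) measure)" using cb2 by simp
    have "AE z in distr M borel (\<lambda>\<omega>. (X \<omega>, Y \<omega>)). fst z \<in> cube"
      using X_cube by (subst AE_distr_iff) (auto intro!: AE_I2 simp: cb3)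
    moreover have eqd: "distr M borel (\<lambda>\<omega>. (Xs i \<omega>, Ys i \<omega>)) = distr M borel (\<lambda>\<omega>. (X \<omega>, Y \<omega>))"
      using ident_data i by blast
    ultimately have "AE z in distr M borel (\<lambda>\<omega>. (Xs i \<omega>, Ys i \<omega>)). fst z \<in> cube" by metis
    hence a1: "AE \<omega> in M. Xs i \<omega> \<in> cube" by (subst (asm) AE_distr_iff) (auto simp: cb3)
    have "AE z in distr M borel X. z \<in> cube"
      using X_cube by (subst AE_distr_iff) (auto intro!: AE_I2)
    moreover have eqg: "distr M borel (Xs' i) = distr M borel X" using ident_ghost i by blast
    ultimately have "AE z in distr M borel (Xs' i). z \<in> cube" by metis
    hence a2: "AE \<omega> in M. Xs' i \<omega> \<in> cube" by (subst (asm) AE_distr_iff) auto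
    show ?thesis using a1 a2 by auto
  qed
  have cubeAE_all: "AE \<omega> in M. \<forall>i<n. Xs i \<omega> \<in> cube \<and> Xs' i \<omega> \<in> cube"
    using cubeAE by (subst AE_all_countable) (auto intro: AE_mp)
  have main: "integrable M (\<lambda>\<omega>. SUP f\<in>F. T f \<omega>) \<and> (\<integral>\<omega>. (SUP f\<in>F. T f \<omega>) \<partial>M) \<le> 0"
  proof (cases "\<gamma> = 0")
    case True
    have "2*b*\<eta> \<le> 0" using geq True g1_0 sig0 by linarith
    hence "b \<le> 0" using eta_pos by (simp add: mult_le_0_iff)
    hence BB: "B = 0" "Bn = 0" using B0 Bn_ge b0 by (auto simp: b_def)
    have feq: "f x = fstar x" if "f \<in> F" "x \<in> cube" for f x
      using F_bd fstar_bd that BB by force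
    have T0: "AE \<omega> in M. \<forall>f\<in>F. T f \<omega> = 0"
    proof (rule AE_mp[OF cubeAE_all], intro AE_I2 impI ballI)
      fix \<omega> f assume c: "\<forall>i<n. Xs i \<omega> \<in> cube \<and> Xs' i \<omega> \<in> cube" and f: "f \<in> F"
      have "Dn' n (\<lambda>i. Xs' i \<omega>) f fstar = 0" unfolding Dn'_def using c feq[OF f] by simp
      moreover have "Pn n (\<lambda>i. Xs i \<omega>) (\<lambda>i. Ys i \<omega>) f fstar = 0" unfolding Pn_def using c feq[OF f] by simp
      ultimately show "T f \<omega> = 0" unfolding T_def using True by simp
    qed
    have S0: "AE \<omega> in M. (SUP f\<in>F. T f \<omega>) = 0"
    proof (rule AE_mp[OF T0], intro AE_I2 impI)
      fix \<omega> assume a: "\<forall>f\<in>F. T f \<omega> = 0"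
      have "(SUP f\<in>F. T f \<omega>) = (SUP f\<in>F. (0::real))" using a by (intro SUP_cong) auto
      thus "(SUP f\<in>F. T f \<omega>) = 0" using F_ne by simp
    qed
    have "integrable M (\<lambda>\<omega>. SUP f\<in>F. T f \<omega>)"
      using integrable_cong_AE[OF supm borel_measurable_const S0] by simp
    moreover have "(\<integral>\<omega>. (SUP f\<in>F. T f \<omega>) \<partial>M) = 0"
      using integral_cong_AE[OF supm borel_measurable_const S0] by simp
    ultimately show ?thesis by simp
  next
    case False
    hence gpos: "\<gamma> > 0" using g0 by simp
    define lam where "lam = real n / (\<tau> * \<gamma>)"
    define cc where "cc = 1 / (\<tau> * \<gamma>)"
    define u where "u = 1 / ((1+\<delta>2) * \<gamma>)"
    have g1pos: "\<gamma>1 > 0" if "b \<noteq> 0" for b'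
    proof -
      have "b^2 > 0" using that b0 by simp
      thus ?thesis unfolding \<gamma>1_def using tau_pos d1 by (intro mult_pos_pos) (auto intro: add_pos_pos)
    qed
    have lam_pos: "lam > 0" using n0 tau_pos gpos by (simp add: lam_def)
    have gb: "2*b*\<eta> < \<gamma>"
    proof (cases "b = 0")
      case True thus ?thesis using gpos by simp
    next
      case False hence "\<gamma>1 > 0" by (rule g1pos)
      thus ?thesis using geq sig0 by linarith
    qed
    have gs: "\<gamma> - 2*b*\<eta> \<ge> 2*(1+1/\<delta>2)*\<sigma>^2" using geq g1_0 by linarith
    have u0: "u \<ge> 0" using d2 gpos by (simp add: u_def)
    have ub: "u * b^2 \<le> 4*\<delta>1*(1+\<delta>1)/(2+\<delta>1)^2"
    proof (cases "b = 0")
      case True thus ?thesis using d1 by simp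
    next
      case False
      hence bp: "b^2 > 0" using b0 by simp
      have g1p: "\<gamma>1 > 0" using False by (rule g1pos)
      have "\<gamma>1 \<le> \<gamma>" using geq sig0 beta0 by linarith
      hence "(1+\<delta>2) * \<gamma>1 \<le> (1+\<delta>2) * \<gamma>" using d2 by simp
      moreover have "0 < (1+\<delta>2) * \<gamma>1" using d2 g1p by simp
      ultimately have "b^2 / ((1+\<delta>2) * \<gamma>) \<le> b^2 / ((1+\<delta>2) * \<gamma>1)"
        using bp by (intro divide_left_mono) (auto intro: mult_pos_pos)
      also have "b^2 / ((1+\<delta>2) * \<gamma>1) = 4*\<delta>1*(1+\<delta>1)/(2+\<delta>1)^2"
        unfolding \<gamma>1_def \<tau>_def tau_def by (rule ub_eq[OF bp d1 d2])
      finally show ?thesis by (simp add: u_def)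
    qed
    have fstm[measurable]: "fst \<in> measurable (borel :: ((real ^ 'd) \<times> real) measure) borel"
      using measurable_fst[of "borel :: (real ^ 'd) measure" "borel :: real measure"] by (simp add: borel_prod)
    have sndm[measurable]: "snd \<in> measurable (borel :: ((real ^ 'd) \<times> real) measure) borel"
      using measurable_snd[of "borel :: (real ^ 'd) measure" "borel :: real measure"] by (simp add: borel_prod)
    have key: "(\<integral>\<^sup>+\<omega>. ennreal (exp (lam * T f \<omega>)) \<partial>M) \<le> ennreal (exp (- L f))" if f: "f \<in> F" for f
    proof -
      have fm[measurable]: "f \<in> borel_measurable borel" using F_meas f by auto
      define g where "g x = f x - fstar x" for x
      have gm[measurable]: "g \<in> borel_measurable borel" unfolding g_def by measurable
      have gb': "\<forall>x\<in>(cube :: (real ^ 'd) set). \<bar>g x\<bar> \<le> b"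
      proof
        fix x :: "real ^ 'd" assume x: "x \<in> cube"
        have "\<bar>g x\<bar> \<le> \<bar>f x\<bar> + \<bar>fstar x\<bar>" unfolding g_def by (rule abs_triangle_ineq4)
        also have "\<dots> \<le> Bn + B" using F_bd fstar_bd f x by (intro add_mono) auto
        finally show "\<bar>g x\<bar> \<le> b" by (simp add: b_def)
      qed
      have A: "(\<integral>\<^sup>+\<omega>. ennreal (exp (-((g (X \<omega>))^2 - 2*(Y \<omega> - fstar (X \<omega>))*g (X \<omega>))/\<gamma>)) \<partial>M)
         \<le> (\<integral>\<^sup>+\<omega>. ennreal (exp (-((g (X \<omega>))^2/((1+\<delta>2)*\<gamma>)))) \<partial>M)"
        by (rule partA[OF prob X_meas Y_meas X_cube Y_int fstar_meas fstar_bd fstar_reg noise_var eta_pos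
              bernstein gm gb' gpos d2 gb gs])
      have Bb: "(\<integral>\<^sup>+\<omega>. ennreal (exp (u/(1+\<delta>1) * (g (X \<omega>))^2)) \<partial>M)
         * (\<integral>\<^sup>+\<omega>. ennreal (exp (-(u * (g (X \<omega>))^2))) \<partial>M) \<le> 1"
        by (rule partB[OF prob X_meas X_cube gm gb' d1 u0 ub])
      define \<Psi> where "\<Psi> x = exp (cc * (f x - fstar x)^2)" for x
      define \<Phi> where "\<Phi> z = exp (-((snd z - f (fst z))^2 - (snd z - fstar (fst z))^2)/\<gamma>)" for z :: "(real ^ 'd) \<times> real"
      have Psi_m: "\<Psi> \<in> borel_measurable borel" unfolding \<Psi>_def by measurable
      have Phi_m: "\<Phi> \<in> borel_measurable borel" unfolding \<Phi>_def by measurable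
      have Psi0: "\<And>x. \<Psi> x \<ge> 0" and Phi0: "\<And>z. \<Phi> z \<ge> 0" by (simp_all add: \<Psi>_def \<Phi>_def)
      have ccu: "cc = u/(1+\<delta>1)" unfolding cc_def u_def \<tau>_def tau_def by simp
      have Psi_eq: "(\<integral>\<^sup>+\<omega>. ennreal (\<Psi> (X \<omega>)) \<partial>M) = (\<integral>\<^sup>+\<omega>. ennreal (exp (u/(1+\<delta>1) * (g (X \<omega>))^2)) \<partial>M)"
        by (simp add: \<Psi>_def g_def ccu)
      have Phi_eq: "(\<integral>\<^sup>+\<omega>. ennreal (\<Phi> (X \<omega>, Y \<omega>)) \<partial>M)
          = (\<integral>\<^sup>+\<omega>. ennreal (exp (-((g (X \<omega>))^2 - 2*(Y \<omega> - fstar (X \<omega>))*g (X \<omega>))/\<gamma>)) \<partial>M)"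
      proof (intro nn_integral_cong)
        fix \<omega>
        have "(Y \<omega> - f (X \<omega>))^2 - (Y \<omega> - fstar (X \<omega>))^2 = (g (X \<omega>))^2 - 2*(Y \<omega> - fstar (X \<omega>))*g (X \<omega>)"
          unfolding g_def by (simp add: power2_eq_square algebra_simps)
        thus "ennreal (\<Phi> (X \<omega>, Y \<omega>)) = ennreal (exp (-((g (X \<omega>))^2 - 2*(Y \<omega> - fstar (X \<omega>))*g (X \<omega>))/\<gamma>))"
          by (simp add: \<Phi>_def)
      qed
      have e3: "(\<integral>\<^sup>+\<omega>. ennreal (exp (-((g (X \<omega>))^2/((1+\<delta>2)*\<gamma>)))) \<partial>M) = (\<integral>\<^sup>+\<omega>. ennreal (exp (-(u * (g (X \<omega>))^2))) \<partial>M)"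
        by (simp add: u_def)
      have le1: "(\<integral>\<^sup>+\<omega>. ennreal (\<Psi> (X \<omega>)) \<partial>M) * (\<integral>\<^sup>+\<omega>. ennreal (\<Phi> (X \<omega>, Y \<omega>)) \<partial>M) \<le> 1"
      proof -
        have "(\<integral>\<^sup>+\<omega>. ennreal (\<Psi> (X \<omega>)) \<partial>M) * (\<integral>\<^sup>+\<omega>. ennreal (\<Phi> (X \<omega>, Y \<omega>)) \<partial>M)
            \<le> (\<integral>\<^sup>+\<omega>. ennreal (\<Psi> (X \<omega>)) \<partial>M) * (\<integral>\<^sup>+\<omega>. ennreal (exp (-(u * (g (X \<omega>))^2))) \<partial>M)"
          unfolding Phi_eq e3[symmetric] using A by (rule mult_left_mono) simp
        also have "\<dots> \<le> 1" unfolding Psi_eq by (rule Bb)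
        finally show ?thesis .
      qed
      have ip: "(\<integral>\<^sup>+\<omega>. ennreal ((\<Prod>i<n. \<Psi> (Xs' i \<omega>)) * (\<Prod>i<n. \<Phi> (Xs i \<omega>, Ys i \<omega>))) \<partial>M) \<le> 1"
        by (rule indep_prod[OF prob X_meas Y_meas Xs_meas indep ident_data ident_ghost Phi_m Psi_m Phi0 Psi0 le1])
      have pw: "exp (lam * T f \<omega>) = exp (- L f) * ((\<Prod>i<n. \<Psi> (Xs' i \<omega>)) * (\<Prod>i<n. \<Phi> (Xs i \<omega>, Ys i \<omega>)))" for \<omega>
      proof -
        define S1 where "S1 = (\<Sum>i<n. (f (Xs' i \<omega>) - fstar (Xs' i \<omega>))^2)"
        define S2 where "S2 = (\<Sum>i<n. (Ys i \<omega> - f (Xs i \<omega>))^2 - (Ys i \<omega> - fstar (Xs i \<omega>))^2)"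
        have "lam * T f \<omega> = S1 / (\<tau>*\<gamma>) - S2 / \<gamma> - L f"
          unfolding lam_def T_def Dn'_def Pn_def S1_def[symmetric] S2_def[symmetric]
          using n0 tau_pos gpos by (simp add: field_simps)
        also have "S1 / (\<tau>*\<gamma>) = (\<Sum>i<n. cc * (f (Xs' i \<omega>) - fstar (Xs' i \<omega>))^2)"
          unfolding S1_def cc_def by (simp add: sum_distrib_left sum_divide_distrib)
        also have "- (S2 / \<gamma>) = (\<Sum>i<n. -((Ys i \<omega> - f (Xs i \<omega>))^2 - (Ys i \<omega> - fstar (Xs i \<omega>))^2)/\<gamma>)"
          unfolding S2_def by (simp only: sum_divide_distrib minus_divide_left[symmetric] sum_negf)
        ultimately have "lam * T f \<omega> = - L f + (\<Sum>i<n. cc * (f (Xs' i \<omega>) - fstar (Xs' i \<omega>))^2)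
            + (\<Sum>i<n. -((Ys i \<omega> - f (Xs i \<omega>))^2 - (Ys i \<omega> - fstar (Xs i \<omega>))^2)/\<gamma>)" by simp
        hence "exp (lam * T f \<omega>) = exp (- L f) * exp (\<Sum>i<n. cc * (f (Xs' i \<omega>) - fstar (Xs' i \<omega>))^2)
            * exp (\<Sum>i<n. -((Ys i \<omega> - f (Xs i \<omega>))^2 - (Ys i \<omega> - fstar (Xs i \<omega>))^2)/\<gamma>)"
          by (simp only: exp_add)
        thus ?thesis by (simp only: exp_sum finite_lessThan \<Psi>_def \<Phi>_def fst_conv snd_conv mult.assoc)
      qed
      have "(\<integral>\<^sup>+\<omega>. ennreal (exp (lam * T f \<omega>)) \<partial>M)
          = (\<integral>\<^sup>+\<omega>. ennreal (exp (- L f)) * ennreal ((\<Prod>i<n. \<Psi> (Xs' i \<omega>)) * (\<Prod>i<n. \<Phi> (Xs i \<omega>, Ys i \<omega>))) \<partial>M)"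
        using Psi0 Phi0 by (intro nn_integral_cong) (simp add: pw ennreal_mult prod_nonneg)
      also have "\<dots> = ennreal (exp (- L f)) * (\<integral>\<^sup>+\<omega>. ennreal ((\<Prod>i<n. \<Psi> (Xs' i \<omega>)) * (\<Prod>i<n. \<Phi> (Xs i \<omega>, Ys i \<omega>))) \<partial>M)"
      proof (rule nn_integral_cmult)
        have pm1: "(\<lambda>\<omega>. \<Prod>i<n. \<Psi> (Xs' i \<omega>)) \<in> borel_measurable M"
        proof (rule borel_measurable_prod)
          fix i assume "i \<in> {..<n}"
          hence [measurable]: "Xs' i \<in> borel_measurable M" using Xs_m by auto
          show "(\<lambda>\<omega>. \<Psi> (Xs' i \<omega>)) \<in> borel_measurable M" using Psi_m by measurable
        qed
        have pm2: "(\<lambda>\<omega>. \<Prod>i<n. \<Phi> (Xs i \<omega>, Ys i \<omega>)) \<in> borel_measurable M"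
        proof (rule borel_measurable_prod)
          fix i assume "i \<in> {..<n}"
          hence [measurable]: "Xs i \<in> borel_measurable M" "Ys i \<in> borel_measurable M" using Xs_m by auto
          show "(\<lambda>\<omega>. \<Phi> (Xs i \<omega>, Ys i \<omega>)) \<in> borel_measurable M" using Phi_m by measurable
        qed
        show "(\<lambda>\<omega>. ennreal ((\<Prod>i<n. \<Psi> (Xs' i \<omega>)) * (\<Prod>i<n. \<Phi> (Xs i \<omega>, Ys i \<omega>)))) \<in> borel_measurable M"
          using pm1 pm2 by measurable
      qed
      also have "\<dots> \<le> ennreal (exp (- L f)) * 1" by (rule mult_left_mono[OF ip]) simp
      finally show ?thesis by simp
    qed
    define S where "S \<omega> = (\<integral>\<^sup>+f. ennreal (exp (lam * T f \<omega>)) \<partial>count_space F)" for \<omega>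
    have Sm[measurable]: "S \<in> borel_measurable M" unfolding S_def
    proof (rule count_space_meas[OF F_count])
      fix f assume "f \<in> F"
      hence [measurable]: "T f \<in> borel_measurable M" by (rule Tm)
      show "(\<lambda>\<omega>. ennreal (exp (lam * T f \<omega>))) \<in> borel_measurable M" by measurable
    qed
    have intS: "(\<integral>\<^sup>+\<omega>. S \<omega> \<partial>M) \<le> 1"
    proof -
      have "(\<integral>\<^sup>+\<omega>. S \<omega> \<partial>M) = (\<integral>\<^sup>+f. (\<integral>\<^sup>+\<omega>. ennreal (exp (lam * T f \<omega>)) \<partial>M) \<partial>count_space F)"
        unfolding S_def
      proof (rule nn_integral_count_space_nn_integral[OF F_count])
        fix f assume "f \<in> F"
        hence [measurable]: "T f \<in> borel_measurable M" by (rule Tm)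
        show "(\<lambda>\<omega>. ennreal (exp (lam * T f \<omega>))) \<in> borel_measurable M" by measurable
      qed
      also have "\<dots> \<le> (\<integral>\<^sup>+f. ennreal (exp (- L f)) \<partial>count_space F)"
        by (rule nn_integral_mono) (simp add: key)
      also have "\<dots> \<le> 1"
        by (rule count_space_le[OF F_count _ L_summable L_sum]) simp
      finally show ?thesis .
    qed
    have Sfin: "AE \<omega> in M. S \<omega> \<noteq> \<infinity>"
      by (rule nn_integral_PInf_AE[OF Sm]) (use intS in \<open>auto simp: top_unique\<close>)
    define s where "s \<omega> = enn2real (S \<omega>)" for \<omega>
    have sm[measurable]: "s \<in> borel_measurable M" unfolding s_def by measurable
    have s0: "s \<omega> \<ge> 0" for \<omega> by (simp add: s_def)
    have s_nn: "(\<integral>\<^sup>+\<omega>. ennreal (s \<omega>) \<partial>M) = (\<integral>\<^sup>+\<omega>. S \<omega> \<partial>M)"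
    proof (rule nn_integral_cong_AE, rule AE_mp[OF Sfin], intro AE_I2 impI)
      fix \<omega> assume "S \<omega> \<noteq> \<infinity>"
      thus "ennreal (s \<omega>) = S \<omega>" by (simp add: s_def less_top)
    qed
    have s_int: "integrable M s"
    proof -
      have "(\<integral>\<^sup>+\<omega>. ennreal (norm (s \<omega>)) \<partial>M) = (\<integral>\<^sup>+\<omega>. S \<omega> \<partial>M)" using s0 s_nn by simp
      thus ?thesis unfolding integrable_iff_bounded using intS by (auto simp: top_unique less_top[symmetric])
    qed
    have s_le: "(\<integral>\<omega>. s \<omega> \<partial>M) \<le> 1"
    proof -
      have "ennreal (\<integral>\<omega>. s \<omega> \<partial>M) = (\<integral>\<^sup>+\<omega>. ennreal (s \<omega>) \<partial>M)"
        by (rule nn_integral_eq_integral[OF s_int, symmetric]) (simp add: s0)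
      also have "\<dots> \<le> 1" using s_nn intS by simp
      finally show ?thesis by (simp add: ennreal_le_1)
    qed
    have single: "v f \<le> (\<integral>\<^sup>+x. v x \<partial>count_space F)" if "f \<in> F" for v :: "_ \<Rightarrow> ennreal" and f
    proof -
      have "(\<integral>\<^sup>+x. (if x = f then v x else 0) \<partial>count_space F) = (\<Sum>x\<in>{f}. (if x = f then v x else 0))"
        by (rule nn_integral_count_space') (use that in auto)
      hence "v f = (\<integral>\<^sup>+x. (if x = f then v x else 0) \<partial>count_space F)" by simp
      also have "\<dots> \<le> (\<integral>\<^sup>+x. v x \<partial>count_space F)" by (rule nn_integral_mono) auto
      finally show ?thesis .
    qed
    have bound: "AE \<omega> in M. \<forall>f\<in>F. T f \<omega> \<le> (s \<omega> - 1) / lam"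
    proof (rule AE_mp[OF Sfin], intro AE_I2 impI ballI)
      fix \<omega> f assume Sf: "S \<omega> \<noteq> \<infinity>" and f: "f \<in> F"
      have Ss: "S \<omega> = ennreal (s \<omega>)" using Sf by (simp add: s_def less_top)
      have "ennreal (exp (lam * T f \<omega>)) \<le> S \<omega>" unfolding S_def by (rule single[OF f])
      hence le: "exp (lam * T f \<omega>) \<le> s \<omega>" unfolding Ss using s0 by (simp add: ennreal_le_iff)
      hence spos: "s \<omega> > 0" by (meson exp_gt_zero less_le_trans)
      have "lam * T f \<omega> \<le> ln (s \<omega>)" using le spos by (metis exp_le_cancel_iff exp_ln)
      also have "\<dots> \<le> s \<omega> - 1" using spos by (rule ln_le_minus_one)
      finally show "T f \<omega> \<le> (s \<omega> - 1) / lam" using lam_pos by (simp add: pos_le_divide_eq mult.commute)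
    qed
    obtain f0 where f0: "f0 \<in> F" using F_ne by auto
    have T0_int: "integrable M (T f0)"
    proof -
      have f0m[measurable]: "f0 \<in> borel_measurable borel" using F_meas f0 by auto
      define \<phi> where "\<phi> x = (f0 x - fstar x)^2" for x
      define \<psi> where "\<psi> z = (snd z - f0 (fst z))^2 - (snd z - fstar (fst z))^2" for z :: "(real ^ 'd) \<times> real"
      have phim[measurable]: "\<phi> \<in> borel_measurable borel" unfolding \<phi>_def by measurable
      have psim[measurable]: "\<psi> \<in> borel_measurable borel" unfolding \<psi>_def by measurable
      have gX: "\<bar>f0 (X \<omega>) - fstar (X \<omega>)\<bar> \<le> b" if "\<omega> \<in> space M" for \<omega>
      proof -
        have x: "X \<omega> \<in> cube" using X_cube that by auto
        have "\<bar>f0 (X \<omega>) - fstar (X \<omega>)\<bar> \<le> \<bar>f0 (X \<omega>)\<bar> + \<bar>fstar (X \<omega>)\<bar>" by (rule abs_triangle_ineq4)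
        also have "\<dots> \<le> Bn + B" using F_bd fstar_bd f0 x by (intro add_mono) auto
        finally show ?thesis by (simp add: b_def)
      qed
      have iphiX: "integrable M (\<lambda>\<omega>. \<phi> (X \<omega>))"
      proof (rule P.integrable_const_bound[where B="b^2"])
        show "AE \<omega> in M. norm (\<phi> (X \<omega>)) \<le> b^2"
        proof (intro AE_I2)
          fix \<omega> assume w: "\<omega> \<in> space M"
          have "(f0 (X \<omega>) - fstar (X \<omega>))^2 \<le> b^2" using gX[OF w]
            by (metis abs_ge_zero order_trans power2_abs power_mono)
          thus "norm (\<phi> (X \<omega>)) \<le> b^2" unfolding \<phi>_def by simp
        qed
      qed measurable
      have ipsiX: "integrable M (\<lambda>\<omega>. \<psi> (X \<omega>, Y \<omega>))"
      proof (rule Bochner_Integration.integrable_bound[where f="\<lambda>\<omega>. b^2 + 2*b*(\<bar>Y \<omega>\<bar> + B)"])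
        show "integrable M (\<lambda>\<omega>. b^2 + 2*b*(\<bar>Y \<omega>\<bar> + B))" using Y_int by simp
        show "AE \<omega> in M. norm (\<psi> (X \<omega>, Y \<omega>)) \<le> norm (b^2 + 2*b*(\<bar>Y \<omega>\<bar> + B))"
        proof (intro AE_I2)
          fix \<omega> assume w: "\<omega> \<in> space M"
          define G where "G = f0 (X \<omega>) - fstar (X \<omega>)"
          define E where "E = Y \<omega> - fstar (X \<omega>)"
          have Gb: "\<bar>G\<bar> \<le> b" using gX[OF w] by (simp add: G_def)
          have Eb: "\<bar>E\<bar> \<le> \<bar>Y \<omega>\<bar> + B" using fstar_bd X_cube w unfolding E_def
            by (metis abs_triangle_ineq4 add_left_mono order_trans)
          have e: "\<psi> (X \<omega>, Y \<omega>) = G^2 - 2*E*G" unfolding \<psi>_def G_def E_def by (simp add: power2_eq_square algebra_simps)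
          have "\<bar>G^2 - 2*E*G\<bar> \<le> G^2 + 2*\<bar>E\<bar>*\<bar>G\<bar>" by (simp add: abs_mult abs_triangle_ineq4[THEN order_trans])
          also have "\<dots> \<le> b^2 + 2*(\<bar>Y \<omega>\<bar> + B)*b"
          proof (intro add_mono mult_mono mult_left_mono)
            show "G^2 \<le> b^2" using Gb by (metis abs_ge_zero order_trans power2_abs power_mono)
          qed (use Gb Eb B0 in auto)
          finally show "norm (\<psi> (X \<omega>, Y \<omega>)) \<le> norm (b^2 + 2*b*(\<bar>Y \<omega>\<bar> + B))"
            unfolding e using b0 B0 by (simp add: algebra_simps)
        qed
      qed measurable
      have iphi: "integrable M (\<lambda>\<omega>. \<phi> (Xs' i \<omega>))" if i: "i < n" for i
      proof -
        have [measurable]: "Xs' i \<in> borel_measurable M" using Xs_m i by auto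
        have "integrable (distr M borel X) \<phi>" using iphiX by (subst integrable_distr_eq) auto
        hence "integrable (distr M borel (Xs' i)) \<phi>" using ident_ghost i by metis
        thus ?thesis by (subst (asm) integrable_distr_eq) auto
      qed
      have ipsi: "integrable M (\<lambda>\<omega>. \<psi> (Xs i \<omega>, Ys i \<omega>))" if i: "i < n" for i
      proof -
        have [measurable]: "Xs i \<in> borel_measurable M" "Ys i \<in> borel_measurable M" using Xs_m i by auto
        have "integrable (distr M borel (\<lambda>\<omega>. (X \<omega>, Y \<omega>))) \<psi>" using ipsiX by (subst integrable_distr_eq) auto
        hence "integrable (distr M borel (\<lambda>\<omega>. (Xs i \<omega>, Ys i \<omega>))) \<psi>" using ident_data i by metis
        thus ?thesis by (subst (asm) integrable_distr_eq) auto
      qed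
      have s1: "integrable M (\<lambda>\<omega>. \<Sum>i<n. \<phi> (Xs' i \<omega>))"
        by (rule Bochner_Integration.integrable_sum) (use iphi in auto)
      have s2: "integrable M (\<lambda>\<omega>. \<Sum>i<n. \<psi> (Xs i \<omega>, Ys i \<omega>))"
        by (rule Bochner_Integration.integrable_sum) (use ipsi in auto)
      have eqT: "T f0 = (\<lambda>\<omega>. (1 / real n) * (\<Sum>i<n. \<phi> (Xs' i \<omega>)) - \<tau> * ((1 / real n) * (\<Sum>i<n. \<psi> (Xs i \<omega>, Ys i \<omega>)))
            - \<tau> * \<gamma> * L f0 / real n)"
        by (rule ext) (simp add: T_def Dn'_def Pn_def \<phi>_def \<psi>_def)
      show ?thesis unfolding eqT using s1 s2 by simp
    qed
    have sup_bounds: "AE \<omega> in M. T f0 \<omega> \<le> (SUP f\<in>F. T f \<omega>) \<and> (SUP f\<in>F. T f \<omega>) \<le> (s \<omega> - 1) / lam"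
    proof (rule AE_mp[OF bound], intro AE_I2 impI)
      fix \<omega> assume bd: "\<forall>f\<in>F. T f \<omega> \<le> (s \<omega> - 1) / lam"
      have bdd: "bdd_above ((\<lambda>f. T f \<omega>) ` F)" using bd by (auto simp: bdd_above_def)
      show "T f0 \<omega> \<le> (SUP f\<in>F. T f \<omega>) \<and> (SUP f\<in>F. T f \<omega>) \<le> (s \<omega> - 1) / lam"
        using cSUP_upper[OF f0 bdd] cSUP_least[OF F_ne, of "\<lambda>f. T f \<omega>" "(s \<omega> - 1) / lam"] bd by auto
    qed
    have sup_int: "integrable M (\<lambda>\<omega>. SUP f\<in>F. T f \<omega>)"
    proof (rule Bochner_Integration.integrable_bound[where f="\<lambda>\<omega>. \<bar>T f0 \<omega>\<bar> + \<bar>(s \<omega> - 1) / lam\<bar>"])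
      show "integrable M (\<lambda>\<omega>. \<bar>T f0 \<omega>\<bar> + \<bar>(s \<omega> - 1) / lam\<bar>)" using T0_int s_int by auto
      show "AE \<omega> in M. norm (SUP f\<in>F. T f \<omega>) \<le> norm (\<bar>T f0 \<omega>\<bar> + \<bar>(s \<omega> - 1) / lam\<bar>)"
      proof (rule AE_mp[OF sup_bounds], intro AE_I2 impI)
        fix \<omega> assume a: "T f0 \<omega> \<le> (SUP f\<in>F. T f \<omega>) \<and> (SUP f\<in>F. T f \<omega>) \<le> (s \<omega> - 1) / lam"
        show "norm (SUP f\<in>F. T f \<omega>) \<le> norm (\<bar>T f0 \<omega>\<bar> + \<bar>(s \<omega> - 1) / lam\<bar>)"
          using a by (simp only: real_norm_def) linarith
      qed
    qed (rule supm)
    have "(\<integral>\<omega>. (SUP f\<in>F. T f \<omega>) \<partial>M) \<le> (\<integral>\<omega>. (s \<omega> - 1) / lam \<partial>M)"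
    proof (rule integral_mono_AE[OF sup_int])
      show "integrable M (\<lambda>\<omega>. (s \<omega> - 1) / lam)" using s_int by simp
      show "AE \<omega> in M. (SUP f\<in>F. T f \<omega>) \<le> (s \<omega> - 1) / lam" using sup_bounds by (rule AE_mp) (intro AE_I2 impI, simp)
    qed
    also have "\<dots> = ((\<integral>\<omega>. s \<omega> \<partial>M) - 1) / lam" using s_int by (simp add: P.prob_space)
    also have "\<dots> \<le> 0" using s_le lam_pos by (simp add: divide_nonpos_pos)
    finally show ?thesis using sup_int by simp

  qed
  thus ?thesis unfolding T_def \<tau>_def \<gamma>_def .
qed

end
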